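(* Let $\alpha\in(0,1)$ and suppose $|\mathrm{CVaR}_\alpha(F^{(i)})|<\infty$ for all $i\in\mathbb K$. Then, with respect to the norm $\|F\|=\max\{\|F\|_\infty,|\int_{-\infty}^0x\,dF(x)|\}$, $\mathrm{CVaR}_\alpha$ is a stable EDPM; that is, (1) $\mathrm{CVaR}_\alpha$ is continuous at every $F\in\mathcal D^\Delta$ with respect to $\|\cdot\|$, and (2) $\lim_{t\to\infty}\|\hat F^{(i)}_t-F^{(i)}\|=0$ almost surely for every $i\in\mathbb K$.
   Context: Let $K\ge1$, $\mathbb K=\{1,\dots,K\}$; arm $i$ produces i.i.d. rewards $X^{(i)}_1,X^{(i)}_2,\dots$ with distribution function $F^{(i)}$, and $\hat F^{(i)}_t(y)=\frac1t\sum_{s\le t}\mathbf 1\{X^{(i)}_s\le y\}$. $\Delta_{K-1}$ is the probability simplex in $\mathbb R^K$, $\mathcal D^\Delta=\{\sum_ip_iF^{(i)}:p\in\Delta_{K-1}\}$. $\|F\|_\infty=\sup_x|F(x)|$; the norm above is considered on the space of bounded functions on $\mathbb R$ for which it is finite (integrals in the Lebesgue–Stieltjes sense). For such $F$, $\mathrm{VaR}_\alpha(F)=\inf\{y\in\mathbb R:F(y)\ge\alpha\}$ and $\mathrm{CVaR}_\alpha(F)=\mathrm{VaR}_\alpha(F)-\frac1\alpha\int_{-\infty}^{\mathrm{VaR}_\alpha(F)}F(y)\,dy$. *)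

theory Defs
  imports "HOL-Probability.Probability"
begin

definition distribution_function :: "(real \<Rightarrow> real) \<Rightarrow> bool" where
  "distribution_function F \<longleftrightarrow> mono F \<and> (\<forall>x. continuous (at_right x) F)
     \<and> (F \<longlongrightarrow> 0) at_bot \<and> (F \<longlongrightarrow> 1) at_top"

definition VaR :: "real \<Rightarrow> (real \<Rightarrow> real) \<Rightarrow> real" where
  "VaR \<alpha> F = Inf {y. F y \<ge> \<alpha>}"

text \<open>Conditional value at risk, with values in the extended reals
  (the Lebesgue integral of the nonnegative function F over (-inf, VaR] may be infinite).\<close>
definition CVaR :: "real \<Rightarrow> (real \<Rightarrow> real) \<Rightarrow> ereal" where
  "CVaR \<alpha> F = ereal (VaR \<alpha> F)
     - ereal (1 / \<alpha>) * enn2ereal (\<integral>\<^sup>+ y. indicator {..VaR \<alpha> F} y * ennreal (F y) \<partial>lborel)"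

definition LS_neg_finite :: "(real \<Rightarrow> real) \<Rightarrow> bool" where
  "LS_neg_finite F \<longleftrightarrow> set_integrable (interval_measure F) {..0} (\<lambda>x. x)"

definition LS_neg_int :: "(real \<Rightarrow> real) \<Rightarrow> real" where
  "LS_neg_int F = (LINT x:{..0}|interval_measure F. x)"

text \<open>The norm ||G - F|| = max { ||G - F||_inf , |int_{-inf}^0 x d(G - F)(x)| } for
  distribution functions G, F (with finite integrals), using linearity of the
  Lebesgue--Stieltjes integral.\<close>
definition sup_norm :: "(real \<Rightarrow> real) \<Rightarrow> real" where
  "sup_norm H = (SUP x. \<bar>H x\<bar>)"

definition cvar_norm_dist :: "(real \<Rightarrow> real) \<Rightarrow> (real \<Rightarrow> real) \<Rightarrow> real" where
  "cvar_norm_dist G F = max (sup_norm (\<lambda>x. G x - F x)) \<bar>LS_neg_int G - LS_neg_int F\<bar>"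

definition mixtures :: "nat \<Rightarrow> (nat \<Rightarrow> real \<Rightarrow> real) \<Rightarrow> (real \<Rightarrow> real) set" where
  "mixtures K F = {(\<lambda>x. \<Sum>i\<in>{1..K}. p i * F i x) | p.
      (\<forall>i\<in>{1..K}. p i \<ge> 0) \<and> (\<Sum>i\<in>{1..K}. p i) = 1}"

definition empirical_cdf :: "(nat \<Rightarrow> real) \<Rightarrow> nat \<Rightarrow> real \<Rightarrow> real" where
  "empirical_cdf Xs t y = (1 / real t) * (\<Sum>s\<in>{1..t}. if Xs s \<le> y then 1 else 0)"

end

theory Submission
  imports Defs
begin

lemma df_mono: "distribution_function G \<Longrightarrow> x \<le> y \<Longrightarrow> G x \<le> G y"
  unfolding distribution_function_def mono_def by blast

lemma df_nonneg: assumes "distribution_function G" shows "0 \<le> G x"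
proof -
  have "(G \<longlongrightarrow> 0) at_bot" using assms unfolding distribution_function_def by blast
  then show ?thesis
    by (rule tendsto_upperbound) (auto simp: eventually_at_bot_linorder intro!: exI[of _ x] df_mono[OF assms])
qed

lemma df_le1: assumes "distribution_function G" shows "G x \<le> 1"
proof -
  have "(G \<longlongrightarrow> 1) at_top" using assms unfolding distribution_function_def by blast
  then show ?thesis
    by (rule tendsto_lowerbound) (auto simp: eventually_at_top_linorder intro!: exI[of _ x] df_mono[OF assms])
qed

lemma df_borel: "distribution_function G \<Longrightarrow> G \<in> borel_measurable borel"
  by (rule borel_measurable_mono) (simp add: distribution_function_def)

lemma df_real_distribution: "distribution_function G \<Longrightarrow> real_distribution (interval_measure G)"
  unfolding distribution_function_def mono_def
  by (intro real_distribution_interval_measure) auto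

lemma df_emeasure_Iic: "distribution_function G \<Longrightarrow> emeasure (interval_measure G) {..x} = G x"
  unfolding distribution_function_def mono_def
  by (intro emeasure_interval_measure_Iic) auto

lemma df_cdf: "distribution_function G \<Longrightarrow> cdf (interval_measure G) = G"
  unfolding distribution_function_def mono_def
  by (intro cdf_interval_measure) auto

lemma df_tonelli:
  assumes G: "distribution_function G"
  shows "(\<integral>\<^sup>+ x. ennreal (- x) * indicator {..0} x \<partial>interval_measure G)
       = (\<integral>\<^sup>+ y. indicator {..0} y * ennreal (G y) \<partial>lborel)"
proof -
  let ?\<mu> = "interval_measure G"
  interpret rd: real_distribution ?\<mu> using df_real_distribution[OF G] .
  interpret pair_sigma_finite ?\<mu> lborel
    by unfold_locales
  have eq1: "ennreal (- x) * indicator {..0} x = (\<integral>\<^sup>+ y. indicator {x..0} y \<partial>lborel)" for x :: real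
  proof -
    have "(\<integral>\<^sup>+ y. indicator {x..0} y \<partial>lborel) = emeasure lborel {x..0}"
      by (rule nn_integral_indicator) simp
    then show ?thesis by (cases "x \<le> 0") (auto simp: indicator_def emeasure_lborel_Icc_eq)
  qed
  have eq2: "(\<integral>\<^sup>+ x. indicator {x..0} y \<partial>?\<mu>) = indicator {..0} y * ennreal (G y)" for y :: real
  proof -
    have "(\<lambda>x. indicator {x..0} y :: ennreal) = (\<lambda>x. indicator {..0} y * indicator {..y} x)"
      by (auto simp: indicator_def fun_eq_iff)
    then show ?thesis
      using df_emeasure_Iic[OF G, of y] by (simp add: nn_integral_cmult_indicator)
  qed
  have meas: "(\<lambda>(x, y). indicator {x..0} y :: ennreal) \<in> borel_measurable (?\<mu> \<Otimes>\<^sub>M lborel)"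
  proof -
    have "(\<lambda>(x::real, y::real). indicator {x..0} y :: ennreal) = (\<lambda>p. if fst p \<le> snd p \<and> snd p \<le> 0 then 1 else 0)"
      by (auto simp: indicator_def fun_eq_iff)
    moreover have "(\<lambda>p::real\<times>real. if fst p \<le> snd p \<and> snd p \<le> 0 then 1 else 0 :: ennreal) \<in> borel_measurable (?\<mu> \<Otimes>\<^sub>M lborel)"
      by measurable
    ultimately show ?thesis by simp
  qed
  have "(\<integral>\<^sup>+ x. ennreal (- x) * indicator {..0} x \<partial>?\<mu>) = (\<integral>\<^sup>+ x. (\<integral>\<^sup>+ y. indicator {x..0} y \<partial>lborel) \<partial>?\<mu>)"
    by (simp add: eq1)
  also have "\<dots> = (\<integral>\<^sup>+ y. (\<integral>\<^sup>+ x. indicator {x..0} y \<partial>?\<mu>) \<partial>lborel)"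
    using Fubini'[OF meas] by simp
  also have "\<dots> = (\<integral>\<^sup>+ y. indicator {..0} y * ennreal (G y) \<partial>lborel)"
    by (simp add: eq2)
  finally show ?thesis .
qed


definition NI :: "(real \<Rightarrow> real) \<Rightarrow> real \<Rightarrow> ennreal" where
  "NI G c = (\<integral>\<^sup>+ y. indicator {..c} y * ennreal (G y) \<partial>lborel)"

definition J :: "(real \<Rightarrow> real) \<Rightarrow> real \<Rightarrow> real" where
  "J G c = (\<integral> y. indicator {..c} y * G y \<partial>lborel)"

lemma NI_alt: "NI G c = (\<integral>\<^sup>+ y. ennreal (indicator {..c} y * G y) \<partial>lborel)"
  unfolding NI_def by (intro nn_integral_cong) (auto simp: indicator_def)

lemma NI_finite:
  assumes G: "distribution_function G" and f: "NI G 0 < \<infinity>"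
  shows "NI G c < \<infinity>"
proof -
  have Gm[measurable]: "G \<in> borel_measurable borel" by (rule df_borel[OF G])
  have "NI G c \<le> (\<integral>\<^sup>+ y. indicator {..0} y * ennreal (G y) + indicator {0..max c 0} y \<partial>lborel)"
    unfolding NI_def
    by (intro nn_integral_mono) (auto simp: indicator_def df_le1[OF G] split: if_split_asm)
  also have "\<dots> = NI G 0 + emeasure lborel {0..max c 0}"
    unfolding NI_def
    by (subst nn_integral_add) auto
  also have "\<dots> < \<infinity>" using f by (simp add: ennreal_add_less_top)
  finally show ?thesis .
qed

lemma J_integrable:
  assumes G: "distribution_function G" and f: "NI G 0 < \<infinity>"
  shows "integrable lborel (\<lambda>y. indicator {..c} y * G y)"
  by (rule integrableI_nonneg) (use NI_finite[OF G f, of c] df_nonneg[OF G] df_borel[OF G] in \<open>auto simp: NI_alt\<close>)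

lemma NI_J:
  assumes G: "distribution_function G" and f: "NI G 0 < \<infinity>"
  shows "NI G c = ennreal (J G c)"
  unfolding NI_alt J_def
  by (rule nn_integral_eq_integral[OF J_integrable[OF G f]]) (auto simp: df_nonneg[OF G])

lemma J_nonneg: "distribution_function G \<Longrightarrow> 0 \<le> J G c"
  unfolding J_def by (intro integral_nonneg_AE) (auto simp: df_nonneg)

lemma LS_finite_iff:
  assumes G: "distribution_function G"
  shows "LS_neg_finite G \<longleftrightarrow> NI G 0 < \<infinity>"
proof -
  have "LS_neg_finite G \<longleftrightarrow> integrable (interval_measure G) (\<lambda>x. indicator {..0} x *\<^sub>R x)"
    unfolding LS_neg_finite_def set_integrable_def ..
  also have "\<dots> \<longleftrightarrow> (\<integral>\<^sup>+ x. ennreal (norm (indicator {..0} x *\<^sub>R x)) \<partial>interval_measure G) < \<infinity>"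
    by (subst integrable_iff_bounded) auto
  also have "(\<integral>\<^sup>+ x. ennreal (norm (indicator {..0} x *\<^sub>R x)) \<partial>interval_measure G)
      = (\<integral>\<^sup>+ x. ennreal (- x) * indicator {..0} x \<partial>interval_measure G)"
    by (intro nn_integral_cong) (auto simp: indicator_def)
  also have "\<dots> = NI G 0" unfolding NI_def by (rule df_tonelli[OF G])
  finally show ?thesis .
qed

lemma LS_value:
  assumes G: "distribution_function G" and f: "NI G 0 < \<infinity>"
  shows "LS_neg_int G = - J G 0"
proof -
  have "LS_neg_int G = - (\<integral>x. indicator {..0} x * (- x) \<partial>interval_measure G)"
    unfolding LS_neg_int_def set_lebesgue_integral_def
    by (simp add: integral_minus_iff[symmetric] del: integral_minus_iff)
  also have "(\<integral>x. indicator {..0} x * (- x) \<partial>interval_measure G)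
     = enn2real (\<integral>\<^sup>+ x. ennreal (indicator {..0} x * (- x)) \<partial>interval_measure G)"
    by (rule integral_eq_nn_integral) (auto simp: indicator_def)
  also have "(\<integral>\<^sup>+ x. ennreal (indicator {..0} x * (- x)) \<partial>interval_measure G)
      = (\<integral>\<^sup>+ x. ennreal (- x) * indicator {..0} x \<partial>interval_measure G)"
    by (intro nn_integral_cong) (auto simp: indicator_def)
  also have "\<dots> = NI G 0" unfolding NI_def by (rule df_tonelli[OF G])
  also have "\<dots> = ennreal (J G 0)" by (rule NI_J[OF G f])
  finally show ?thesis using J_nonneg[OF G] by simp
qed


lemma df_lims:
  assumes "distribution_function G"
  shows "(G \<longlongrightarrow> 0) at_bot" "(G \<longlongrightarrow> 1) at_top" "\<And>x. continuous (at_right x) G"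
  using assms unfolding distribution_function_def by auto

lemma df_exists_low:
  assumes G: "distribution_function G" and e: "0 < e"
  obtains a where "\<And>y. y \<le> a \<Longrightarrow> G y < e"
proof -
  have "eventually (\<lambda>y. G y < e) at_bot"
    using order_tendstoD(2)[OF df_lims(1)[OF G] e] .
  then obtain a where "\<And>y. y \<le> a \<Longrightarrow> G y < e" by (auto simp: eventually_at_bot_linorder)
  then show ?thesis using that by blast
qed

lemma df_exists_high:
  assumes G: "distribution_function G" and e: "e < 1"
  obtains b where "\<And>y. b \<le> y \<Longrightarrow> e < G y"
proof -
  have "eventually (\<lambda>y. e < G y) at_top"
    using order_tendstoD(1)[OF df_lims(2)[OF G] e] .
  then obtain b where "\<And>y. b \<le> y \<Longrightarrow> e < G y" by (auto simp: eventually_at_top_linorder)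
  then show ?thesis using that by blast
qed

context
  fixes G :: "real \<Rightarrow> real" and \<alpha> :: real
  assumes G: "distribution_function G" and a0: "0 < \<alpha>" and a1: "\<alpha> < 1"
begin

lemma VaR_set_ne: "{y. \<alpha> \<le> G y} \<noteq> {}"
proof -
  obtain b where "\<And>y. b \<le> y \<Longrightarrow> \<alpha> < G y" using df_exists_high[OF G a1] by blast
  then show ?thesis by (auto intro!: exI[of _ b] less_imp_le)
qed

lemma VaR_set_bdd: "bdd_below {y. \<alpha> \<le> G y}"
proof -
  obtain a where a: "\<And>y. y \<le> a \<Longrightarrow> G y < \<alpha>" using df_exists_low[OF G a0] by blast
  show ?thesis
  proof (rule bdd_belowI[of _ a])
    fix y assume "y \<in> {y. \<alpha> \<le> G y}"
    then show "a \<le> y" using a[of y] by force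
  qed
qed

lemma VaR_le: "\<alpha> \<le> G y \<Longrightarrow> VaR \<alpha> G \<le> y"
  unfolding VaR_def by (rule cInf_lower) (use VaR_set_bdd in auto)

lemma VaR_ge: "G a < \<alpha> \<Longrightarrow> a \<le> VaR \<alpha> G"
  unfolding VaR_def
proof (rule cInf_greatest[OF VaR_set_ne])
  fix y assume "G a < \<alpha>" "y \<in> {y. \<alpha> \<le> G y}"
  then show "a \<le> y" using df_mono[OF G, of y a] by (cases "y < a") auto
qed

lemma VaR_below: "y < VaR \<alpha> G \<Longrightarrow> G y < \<alpha>"
  using VaR_le[of y] by (cases "\<alpha> \<le> G y") auto

lemma VaR_at: "\<alpha> \<le> G (VaR \<alpha> G)"
proof -
  let ?v = "VaR \<alpha> G"
  have lim: "(G \<longlongrightarrow> G ?v) (at_right ?v)"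
    using df_lims(3)[OF G, of ?v] by (simp add: continuous_within)
  have ev: "eventually (\<lambda>y. \<alpha> \<le> G y) (at_right ?v)"
  proof (rule eventually_at_rightI[of ?v "?v + 1"])
    fix y assume "y \<in> {?v<..<?v + 1}"
    then have "?v < y" by simp
    then obtain z where z: "\<alpha> \<le> G z" "z < y"
      unfolding VaR_def using cInf_less_iff[OF VaR_set_ne VaR_set_bdd] by auto
    then show "\<alpha> \<le> G y" using df_mono[OF G, of z y] by simp
  qed simp
  show ?thesis by (rule tendsto_lowerbound[OF lim ev]) simp
qed

end


lemma ind_Ioc_diff: "(a::real) \<le> b \<Longrightarrow> indicator {..b} y * (g::real) - indicator {..a} y * g = indicator {a<..b} y * g"
  by (auto simp: indicator_def)

lemma Ioc_integrable:
  assumes G: "distribution_function G" and f: "NI G 0 < \<infinity>" and ab: "a \<le> b"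
  shows "integrable lborel (\<lambda>y. indicator {a<..b} y * G y)"
proof -
  have "integrable lborel (\<lambda>y. indicator {..b} y * G y - indicator {..a} y * G y)"
    by (intro Bochner_Integration.integrable_diff J_integrable[OF G f])
  then show ?thesis by (simp add: ind_Ioc_diff[OF ab])
qed

lemma J_diff:
  assumes G: "distribution_function G" and f: "NI G 0 < \<infinity>" and ab: "a \<le> b"
  shows "J G b - J G a = (\<integral>y. indicator {a<..b} y * G y \<partial>lborel)"
proof -
  have "J G b - J G a = (\<integral>y. indicator {..b} y * G y - indicator {..a} y * G y \<partial>lborel)"
    unfolding J_def by (rule Bochner_Integration.integral_diff[symmetric]) (intro J_integrable[OF G f])+
  then show ?thesis by (simp add: ind_Ioc_diff[OF ab])
qed

lemma int_const_Ioc: "a \<le> b \<Longrightarrow> (\<integral>y. indicator {a<..b} y * (c::real) \<partial>lborel) = c * (b - a)"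
  by simp

lemma phi_opt:
  assumes G: "distribution_function G" and f: "NI G 0 < \<infinity>" and a0: "0 < \<alpha>" and a1: "\<alpha> < 1"
  shows "c - J G c / \<alpha> \<le> VaR \<alpha> G - J G (VaR \<alpha> G) / \<alpha>"
proof -
  let ?v = "VaR \<alpha> G"
  have key: "J G ?v - J G c \<le> \<alpha> * (?v - c)"
  proof (cases "c \<le> ?v")
    case True
    have "J G ?v - J G c = (\<integral>y. indicator {c<..?v} y * G y \<partial>lborel)" by (rule J_diff[OF G f True])
    also have "\<dots> \<le> (\<integral>y. indicator {c<..?v} y * \<alpha> \<partial>lborel)"
    proof (rule integral_mono_AE)
      show "integrable lborel (\<lambda>y. indicator {c<..?v} y * G y)" by (rule Ioc_integrable[OF G f True])
      show "integrable lborel (\<lambda>y. indicator {c<..?v} y * \<alpha>)"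
        using True by simp
      show "AE y in lborel. indicator {c<..?v} y * G y \<le> indicator {c<..?v} y * \<alpha>"
        using AE_lborel_singleton[of ?v]
      proof eventually_elim
        case (elim y)
        then show ?case using VaR_below[OF G a0 a1, of y] by (auto simp: indicator_def)
      qed
    qed
    also have "\<dots> = \<alpha> * (?v - c)" using True by simp
    finally show ?thesis .
  next
    case False
    then have cv: "?v \<le> c" by simp
    have "\<alpha> * (c - ?v) = (\<integral>y. indicator {?v<..c} y * \<alpha> \<partial>lborel)" using cv by simp
    also have "\<dots> \<le> (\<integral>y. indicator {?v<..c} y * G y \<partial>lborel)"
    proof (rule integral_mono)
      show "integrable lborel (\<lambda>y. indicator {?v<..c} y * G y)" by (rule Ioc_integrable[OF G f cv])
      show "integrable lborel (\<lambda>y. indicator {?v<..c} y * \<alpha>)" using cv by simp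
      fix y
      show "indicator {?v<..c} y * \<alpha> \<le> indicator {?v<..c} y * G y"
        using VaR_at[OF G a0 a1] df_mono[OF G, of ?v y] by (auto simp: indicator_def)
    qed
    also have "\<dots> = J G c - J G ?v" by (rule J_diff[OF G f cv, symmetric])
    finally show ?thesis by (simp add: algebra_simps)
  qed
  then have "J G ?v / \<alpha> - J G c / \<alpha> \<le> ?v - c"
    using a0 by (simp add: diff_divide_distrib[symmetric] divide_le_eq mult.commute)
  then show ?thesis by simp
qed


lemma J_close_Ioc:
  assumes G: "distribution_function G" and f: "NI G 0 < \<infinity>"
    and H: "distribution_function H" and g: "NI H 0 < \<infinity>"
    and d: "\<And>y. \<bar>G y - H y\<bar> \<le> d" and ab: "a \<le> b"
  shows "\<bar>(J G b - J G a) - (J H b - J H a)\<bar> \<le> (b - a) * d"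
proof -
  have iG: "integrable lborel (\<lambda>y. indicator {a<..b} y * G y)" by (rule Ioc_integrable[OF G f ab])
  have iH: "integrable lborel (\<lambda>y. indicator {a<..b} y * H y)" by (rule Ioc_integrable[OF H g ab])
  have "(J G b - J G a) - (J H b - J H a) = (\<integral>y. indicator {a<..b} y * G y \<partial>lborel) - (\<integral>y. indicator {a<..b} y * H y \<partial>lborel)"
    using J_diff[OF G f ab] J_diff[OF H g ab] by simp
  also have "\<dots> = (\<integral>y. indicator {a<..b} y * G y - indicator {a<..b} y * H y \<partial>lborel)"
    by (rule Bochner_Integration.integral_diff[symmetric, OF iG iH])
  finally have eq: "(J G b - J G a) - (J H b - J H a) = (\<integral>y. indicator {a<..b} y * G y - indicator {a<..b} y * H y \<partial>lborel)" .
  have "\<bar>\<integral>y. indicator {a<..b} y * G y - indicator {a<..b} y * H y \<partial>lborel\<bar> \<le> (\<integral>y. \<bar>indicator {a<..b} y * G y - indicator {a<..b} y * H y\<bar> \<partial>lborel)"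
    by (rule integral_abs_bound)
  also have "\<dots> \<le> (\<integral>y. indicator {a<..b} y * d \<partial>lborel)"
  proof (rule integral_mono)
    show "integrable lborel (\<lambda>y. \<bar>indicator {a<..b} y * G y - indicator {a<..b} y * H y\<bar>)"
      by (intro integrable_abs Bochner_Integration.integrable_diff iG iH)
    show "integrable lborel (\<lambda>y. indicator {a<..b} y * d)" using ab by simp
    fix y show "\<bar>indicator {a<..b} y * G y - indicator {a<..b} y * H y\<bar> \<le> indicator {a<..b} y * d"
      using d[of y] by (auto simp: indicator_def)
  qed
  also have "\<dots> = d * (b - a)" using ab by (rule int_const_Ioc)
  finally show ?thesis using eq by (simp add: mult.commute)
qed

lemma J_close:
  assumes G: "distribution_function G" and f: "NI G 0 < \<infinity>"
    and H: "distribution_function H" and g: "NI H 0 < \<infinity>"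
    and d: "\<And>y. \<bar>G y - H y\<bar> \<le> d"
  shows "\<bar>J G c - J H c\<bar> \<le> \<bar>J G 0 - J H 0\<bar> + \<bar>c\<bar> * d"
proof (cases "0 \<le> c")
  case True
  have "\<bar>(J G c - J G 0) - (J H c - J H 0)\<bar> \<le> (c - 0) * d" by (rule J_close_Ioc[OF G f H g d True])
  moreover have "\<bar>c\<bar> = c" using True by simp
  ultimately show ?thesis by (smt (verit))
next
  case False
  then have "c \<le> 0" by simp
  have "\<bar>(J G 0 - J G c) - (J H 0 - J H c)\<bar> \<le> (0 - c) * d" by (rule J_close_Ioc[OF G f H g d \<open>c \<le> 0\<close>])
  moreover have "\<bar>c\<bar> = 0 - c" using False by simp
  ultimately show ?thesis by (smt (verit))
qed

lemma CVaR_eq: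
  assumes G: "distribution_function G" and f: "NI G 0 < \<infinity>"
  shows "CVaR \<alpha> G = ereal (VaR \<alpha> G - J G (VaR \<alpha> G) / \<alpha>)"
proof -
  have "CVaR \<alpha> G = ereal (VaR \<alpha> G) - ereal (1 / \<alpha>) * enn2ereal (NI G (VaR \<alpha> G))"
    unfolding CVaR_def NI_def ..
  also have "\<dots> = ereal (VaR \<alpha> G) - ereal (1 / \<alpha>) * ereal (J G (VaR \<alpha> G))"
    using NI_J[OF G f] J_nonneg[OF G] by simp
  finally show ?thesis by simp
qed


lemma sup_norm_ge:
  assumes G: "distribution_function G" and H: "distribution_function H"
  shows "\<bar>G y - H y\<bar> \<le> sup_norm (\<lambda>x. G x - H x)"
  unfolding sup_norm_def
proof (rule cSUP_upper)
  show "bdd_above (range (\<lambda>x. \<bar>G x - H x\<bar>))"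
  proof (rule bdd_aboveI[of _ 1])
    fix z assume "z \<in> range (\<lambda>x. \<bar>G x - H x\<bar>)"
    then obtain x where "z = \<bar>G x - H x\<bar>" by auto
    then show "z \<le> 1" using df_nonneg[OF G, of x] df_le1[OF G, of x] df_nonneg[OF H, of x] df_le1[OF H, of x] by auto
  qed
qed simp

lemma cvar_cont:
  assumes G0: "distribution_function G0" and f0: "NI G0 0 < \<infinity>"
    and a0: "0 < \<alpha>" and a1: "\<alpha> < 1" and e: "0 < e"
  shows "\<exists>\<delta>>0. \<forall>G. distribution_function G \<and> LS_neg_finite G \<and> cvar_norm_dist G G0 < \<delta>
              \<longrightarrow> \<bar>CVaR \<alpha> G - CVaR \<alpha> G0\<bar> < ereal e"
proof -
  obtain a where a: "\<And>y. y \<le> a \<Longrightarrow> G0 y < \<alpha> / 2" using df_exists_low[OF G0, of "\<alpha>/2"] a0 by auto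
  obtain b where b: "\<And>y. b \<le> y \<Longrightarrow> (1 + \<alpha>) / 2 < G0 y" using df_exists_high[OF G0, of "(1+\<alpha>)/2"] a1 by auto
  define v0 where "v0 = VaR \<alpha> G0"
  define R where "R = \<bar>a\<bar> + \<bar>b\<bar> + \<bar>v0\<bar>"
  have R0: "0 \<le> R" unfolding R_def by simp
  define \<delta> where "\<delta> = min (min (\<alpha>/2) ((1-\<alpha>)/2)) (e * \<alpha> / (2 * (1 + R)))"
  have \<delta>0: "0 < \<delta>" unfolding \<delta>_def using a0 a1 e R0 by auto
  have \<delta>1: "\<delta> \<le> \<alpha>/2" "\<delta> \<le> (1-\<alpha>)/2" unfolding \<delta>_def by (metis min.cobounded1 min.coboundedI1, metis min.cobounded1 min.cobounded2 order.trans)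
  have \<delta>2: "\<delta> * (1 + R) / \<alpha> \<le> e / 2"
  proof -
    have "\<delta> \<le> e * \<alpha> / (2 * (1 + R))" unfolding \<delta>_def by auto
    then have "\<delta> * (1 + R) \<le> e * \<alpha> / 2" using R0 by (simp add: field_simps)
    then show ?thesis using a0 by (simp add: field_simps)
  qed
  show ?thesis
  proof (intro exI[of _ \<delta>] conjI allI impI \<delta>0)
    fix G assume asm: "distribution_function G \<and> LS_neg_finite G \<and> cvar_norm_dist G G0 < \<delta>"
    then have G: "distribution_function G" and f: "NI G 0 < \<infinity>" and dist: "cvar_norm_dist G G0 < \<delta>"
      using LS_finite_iff by auto
    define d where "d = sup_norm (\<lambda>x. G x - G0 x)"
    have dy: "\<And>y. \<bar>G y - G0 y\<bar> \<le> d" unfolding d_def by (rule sup_norm_ge[OF G G0])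
    have d\<delta>: "d < \<delta>" using dist unfolding cvar_norm_dist_def d_def by simp
    have d0: "0 \<le> d" using dy[of 0] by simp
    have X: "\<bar>J G 0 - J G0 0\<bar> < \<delta>"
      using dist LS_value[OF G f] LS_value[OF G0 f0] unfolding cvar_norm_dist_def by (simp add: abs_minus_commute)
    define v where "v = VaR \<alpha> G"
    have av: "a \<le> v" unfolding v_def
    proof (rule VaR_ge[OF G a0 a1])
      show "G a < \<alpha>" using a[of a] dy[of a] \<delta>1 d\<delta> by (simp add: abs_le_iff)
    qed
    have vb: "v \<le> b" unfolding v_def
    proof (rule VaR_le[OF G a0 a1])
      show "\<alpha> \<le> G b" using b[of b] dy[of b] \<delta>1 d\<delta> by (simp add: abs_le_iff)
    qed
    have vR: "\<bar>v\<bar> \<le> R" and v0R: "\<bar>v0\<bar> \<le> R" using av vb unfolding R_def by auto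
    have bnd: "\<bar>J G c - J G0 c\<bar> / \<alpha> \<le> e / 2" if "\<bar>c\<bar> \<le> R" for c
    proof -
      have "\<bar>J G c - J G0 c\<bar> \<le> \<bar>J G 0 - J G0 0\<bar> + \<bar>c\<bar> * d" by (rule J_close[OF G f G0 f0 dy])
      also have "\<bar>c\<bar> * d \<le> R * \<delta>" using that d\<delta> d0 R0 by (intro mult_mono) auto
      finally have "\<bar>J G c - J G0 c\<bar> \<le> \<delta> * (1 + R)" using X by (simp add: algebra_simps)
      then have "\<bar>J G c - J G0 c\<bar> / \<alpha> \<le> \<delta> * (1 + R) / \<alpha>" using a0 by (simp add: divide_right_mono)
      then show ?thesis using \<delta>2 by linarith
    qed
    have opt1: "v0 - J G v0 / \<alpha> \<le> v - J G v / \<alpha>" unfolding v_def by (rule phi_opt[OF G f a0 a1])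
    have opt2: "v - J G0 v / \<alpha> \<le> v0 - J G0 v0 / \<alpha>" unfolding v0_def by (rule phi_opt[OF G0 f0 a0 a1])
    have b1: "\<bar>J G v - J G0 v\<bar> / \<alpha> \<le> e / 2" by (rule bnd[OF vR])
    have b2: "\<bar>J G v0 - J G0 v0\<bar> / \<alpha> \<le> e / 2" by (rule bnd[OF v0R])
    have "\<bar>(v - J G v / \<alpha>) - (v0 - J G0 v0 / \<alpha>)\<bar> < e"
    proof -
      have u1: "(v - J G v / \<alpha>) - (v0 - J G0 v0 / \<alpha>) \<le> (J G0 v - J G v) / \<alpha>"
        using opt2 by (simp add: diff_divide_distrib)
      have u2: "(v0 - J G0 v0 / \<alpha>) - (v - J G v / \<alpha>) \<le> (J G v0 - J G0 v0) / \<alpha>"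
        using opt1 by (simp add: diff_divide_distrib)
      have "(J G0 v - J G v) / \<alpha> \<le> \<bar>J G v - J G0 v\<bar> / \<alpha>" using a0 by (intro divide_right_mono) auto
      moreover have "(J G v0 - J G0 v0) / \<alpha> \<le> \<bar>J G v0 - J G0 v0\<bar> / \<alpha>" using a0 by (intro divide_right_mono) auto
      ultimately show ?thesis unfolding abs_less_iff using u1 u2 b1 b2 e by (intro conjI; linarith)
    qed
    then show "\<bar>CVaR \<alpha> G - CVaR \<alpha> G0\<bar> < ereal e"
      using CVaR_eq[OF G f, of \<alpha>] CVaR_eq[OF G0 f0, of \<alpha>] unfolding v_def v0_def by simp
  qed
qed


lemma NI_finite_gen:
  assumes G: "distribution_function G" and f: "NI G c < \<infinity>"
  shows "NI G c' < \<infinity>"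
proof -
  have Gm[measurable]: "G \<in> borel_measurable borel" by (rule df_borel[OF G])
  have "NI G c' \<le> (\<integral>\<^sup>+ y. indicator {..c} y * ennreal (G y) + indicator {c..max c' c} y \<partial>lborel)"
    unfolding NI_def
    by (intro nn_integral_mono) (auto simp: indicator_def df_le1[OF G] split: if_split_asm)
  also have "\<dots> = NI G c + emeasure lborel {c..max c' c}"
    unfolding NI_def
    by (subst nn_integral_add) auto
  also have "\<dots> < \<infinity>" using f by (simp add: ennreal_add_less_top)
  finally show ?thesis .
qed


lemma CVaR_finite_NI:
  assumes G: "distribution_function G" and a0: "0 < \<alpha>" and fin: "\<bar>CVaR \<alpha> G\<bar> < \<infinity>"
  shows "NI G 0 < \<infinity>"
proof (rule NI_finite_gen[OF G, of "VaR \<alpha> G"])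
  have eq: "CVaR \<alpha> G = ereal (VaR \<alpha> G) - ereal (1 / \<alpha>) * enn2ereal (NI G (VaR \<alpha> G))"
    unfolding CVaR_def NI_def by (rule refl)
  show "NI G (VaR \<alpha> G) < \<infinity>"
  proof (rule ccontr)
    assume "\<not> NI G (VaR \<alpha> G) < \<infinity>"
    then have "NI G (VaR \<alpha> G) = top" unfolding infinity_ennreal_def using top.not_eq_extremum by metis
    then have "enn2ereal (NI G (VaR \<alpha> G)) = \<infinity>" by simp
    moreover have "ereal (1 / \<alpha>) * \<infinity> = \<infinity>" using a0 by simp
    ultimately have "CVaR \<alpha> G = ereal (VaR \<alpha> G) - \<infinity>" using eq by simp
    then have "CVaR \<alpha> G = - \<infinity>" by simp
    then show False using fin by simp
  qed
qed

lemma mixture_df: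
  fixes K :: nat
  assumes F: "\<And>i. i \<in> {1..K} \<Longrightarrow> distribution_function (F i)"
    and p: "\<And>i. i \<in> {1..K} \<Longrightarrow> 0 \<le> p i" and ps: "(\<Sum>i\<in>{1..K}. p i) = 1"
  shows "distribution_function (\<lambda>x. \<Sum>i\<in>{1..K}. p i * F i x)"
  unfolding distribution_function_def
proof (intro conjI allI)
  show "mono (\<lambda>x. \<Sum>i\<in>{1..K}. p i * F i x)"
    by (rule monoI, rule sum_mono, rule mult_left_mono) (auto intro: df_mono[OF F] p)
  fix x
  show "continuous (at_right x) (\<lambda>x. \<Sum>i\<in>{1..K}. p i * F i x)"
    by (intro continuous_sum continuous_mult continuous_const) (use F df_lims(3) in blast)
next
  have "((\<lambda>x. \<Sum>i\<in>{1..K}. p i * F i x) \<longlongrightarrow> (\<Sum>i\<in>{1..K}. p i * 0)) at_bot"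
    by (intro tendsto_sum tendsto_mult tendsto_const) (use F df_lims(1) in blast)
  then show "((\<lambda>x. \<Sum>i\<in>{1..K}. p i * F i x) \<longlongrightarrow> 0) at_bot" by simp
  have "((\<lambda>x. \<Sum>i\<in>{1..K}. p i * F i x) \<longlongrightarrow> (\<Sum>i\<in>{1..K}. p i * 1)) at_top"
    by (intro tendsto_sum tendsto_mult tendsto_const) (use F df_lims(2) in blast)
  then show "((\<lambda>x. \<Sum>i\<in>{1..K}. p i * F i x) \<longlongrightarrow> 1) at_top" using ps by simp
qed


lemma mixture_NI:
  fixes K :: nat
  assumes F: "\<And>i. i \<in> {1..K} \<Longrightarrow> distribution_function (F i)"
    and f: "\<And>i. i \<in> {1..K} \<Longrightarrow> NI (F i) 0 < \<infinity>"
    and p: "\<And>i. i \<in> {1..K} \<Longrightarrow> 0 \<le> p i"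
  shows "NI (\<lambda>x. \<Sum>i\<in>{1..K}. p i * F i x) 0 < \<infinity>"
proof -
  have "NI (\<lambda>x. \<Sum>i\<in>{1..K}. p i * F i x) 0
      = (\<integral>\<^sup>+ y. (\<Sum>i\<in>{1..K}. ennreal (p i) * (indicator {..0} y * ennreal (F i y))) \<partial>lborel)"
    unfolding NI_def
  proof (intro nn_integral_cong)
    fix y :: real
    have "ennreal (\<Sum>i\<in>{1..K}. p i * F i y) = (\<Sum>i\<in>{1..K}. ennreal (p i * F i y))"
      by (rule sum_ennreal[symmetric]) (intro mult_nonneg_nonneg p df_nonneg[OF F]; assumption)
    also have "\<dots> = (\<Sum>i\<in>{1..K}. ennreal (p i) * ennreal (F i y))"
      by (intro sum.cong refl ennreal_mult p df_nonneg[OF F]; simp)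
    finally show "indicator {..0} y * ennreal (\<Sum>i\<in>{1..K}. p i * F i y) = (\<Sum>i\<in>{1..K}. ennreal (p i) * (indicator {..0} y * ennreal (F i y)))"
      by (simp add: sum_distrib_left mult.left_commute)
  qed
  also have "\<dots> = (\<Sum>i\<in>{1..K}. ennreal (p i) * NI (F i) 0)"
    unfolding NI_def
  proof (subst nn_integral_sum)
    show "(\<lambda>y. ennreal (p i) * (indicator {..0} y * ennreal (F i y))) \<in> borel_measurable lborel" if "i \<in> {1..K}" for i
      using df_borel[OF F[OF that]] by measurable
    show "(\<Sum>i\<in>{1..K}. \<integral>\<^sup>+ y. ennreal (p i) * (indicator {..0} y * ennreal (F i y)) \<partial>lborel) =
      (\<Sum>i\<in>{1..K}. ennreal (p i) * \<integral>\<^sup>+ y. indicator {..0} y * ennreal (F i y) \<partial>lborel)"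
    proof (rule sum.cong[OF refl], rule nn_integral_cmult)
      fix i assume "i \<in> {1..K}"
      then show "(\<lambda>y. indicator {..0} y * ennreal (F i y)) \<in> borel_measurable lborel"
        using df_borel[OF F] by measurable
    qed
  qed
  also have "\<dots> < \<infinity>"
  proof -
    have "\<forall>i\<in>{1..K}. ennreal (p i) * NI (F i) 0 < top"
      using f by (auto simp: ennreal_mult_less_top infinity_ennreal_def)
    then show ?thesis by (simp add: infinity_ennreal_def)
  qed
  finally show ?thesis .
qed


lemma ennreal_suminf_infinite:
  fixes f :: "nat \<Rightarrow> ennreal"
  assumes inf: "infinite {n. 1 \<le> f n}"
  shows "(\<Sum>n. f n) = \<infinity>"
proof -
  have *: "of_nat N \<le> (\<Sum>n. f n)" for N
  proof -
    obtain S where S: "S \<subseteq> {n. 1 \<le> f n}" "finite S" "card S = N"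
      using infinite_arbitrarily_large[OF inf] by blast
    have "(of_nat N :: ennreal) = (\<Sum>n\<in>S. 1)" using S by simp
    also have "\<dots> \<le> (\<Sum>n\<in>S. f n)" using S by (intro sum_mono) auto
    also have "\<dots> \<le> (\<Sum>n. f n)" by (rule sum_le_suminf) (use S in auto)
    finally show ?thesis .
  qed
  show ?thesis
  proof (rule ccontr)
    assume "(\<Sum>n. f n) \<noteq> \<infinity>"
    then have "(\<Sum>n. f n) < top" by (simp add: top.not_eq_extremum)
    then obtain N where "(\<Sum>n. f n) < of_nat N" using ennreal_Ex_less_of_nat by blast
    then show False using *[of N] by simp
  qed
qed

lemma (in prob_space) borel_cantelli:
  assumes A: "\<And>n. A n \<in> events" and s: "(\<Sum>n. emeasure M (A n)) < \<infinity>"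
  shows "AE x in M. eventually (\<lambda>n. x \<notin> A n) sequentially"
proof -
  have "(\<integral>\<^sup>+ x. (\<Sum>n. indicator (A n) x) \<partial>M) = (\<Sum>n. emeasure M (A n))"
    by (subst nn_integral_suminf) (use A in auto)
  then have "(\<integral>\<^sup>+ x. (\<Sum>n. indicator (A n) x) \<partial>M) \<noteq> \<infinity>" using s by simp
  then have "AE x in M. (\<Sum>n. indicator (A n) x :: ennreal) \<noteq> \<infinity>"
    by (intro nn_integral_PInf_AE) (use A in auto)
  then show ?thesis
  proof (rule AE_mp, intro AE_I2 impI)
    fix x assume "(\<Sum>n. indicator (A n) x :: ennreal) \<noteq> \<infinity>"
    then have "finite {n. 1 \<le> (indicator (A n) x :: ennreal)}"
      using ennreal_suminf_infinite[of "\<lambda>n. indicator (A n) x"] by blast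
    moreover have "{n. 1 \<le> (indicator (A n) x :: ennreal)} = {n. \<not> x \<notin> A n}"
      by (auto simp: indicator_def)
    ultimately have "eventually (\<lambda>n. x \<notin> A n) cofinite"
      by (simp add: eventually_cofinite)
    then show "eventually (\<lambda>n. x \<notin> A n) sequentially"
      by (simp add: cofinite_eq_sequentially)
  qed
qed


lemma cesaro:
  fixes a :: "nat \<Rightarrow> real"
  assumes a: "a \<longlonglongrightarrow> L"
  shows "(\<lambda>n. (\<Sum>i<n. a i) / real n) \<longlonglongrightarrow> L"
proof (rule LIMSEQ_I)
  fix r :: real assume r: "0 < r"
  obtain N where N: "\<And>i. i \<ge> N \<Longrightarrow> \<bar>a i - L\<bar> < r / 2"
    using LIMSEQ_D[OF a, of "r/2"] r by auto
  define C where "C = (\<Sum>i<N. \<bar>a i - L\<bar>)"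
  have C0: "0 \<le> C" unfolding C_def by (intro sum_nonneg) auto
  obtain M :: nat where M: "2 * C / r < M" using reals_Archimedean2 by blast
  show "\<exists>no. \<forall>n\<ge>no. norm ((\<Sum>i<n. a i) / real n - L) < r"
  proof (intro exI[of _ "max (Suc N) (Suc M)"] allI impI)
    fix n assume n: "max (Suc N) (Suc M) \<le> n"
    then have nN: "N \<le> n" and n0: "0 < n" and nM: "M < n" by auto
    have "(\<Sum>i<n. a i) / real n - L = (\<Sum>i<n. a i - L) / real n"
      using n0 by (simp add: sum_subtractf field_simps)
    moreover have "\<bar>\<Sum>i<n. a i - L\<bar> \<le> C + real (n - N) * (r / 2)"
    proof -
      have split: "{..<n} = {..<N} \<union> {N..<n}" using nN by auto
      have "\<bar>\<Sum>i<n. a i - L\<bar> \<le> (\<Sum>i<n. \<bar>a i - L\<bar>)" by (rule sum_abs)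
      also have "\<dots> = C + (\<Sum>i\<in>{N..<n}. \<bar>a i - L\<bar>)"
        unfolding C_def split by (subst sum.union_disjoint) auto
      also have "(\<Sum>i\<in>{N..<n}. \<bar>a i - L\<bar>) \<le> (\<Sum>i\<in>{N..<n}. r / 2)"
      proof (rule sum_mono)
        fix i assume "i \<in> {N..<n}"
        then show "\<bar>a i - L\<bar> \<le> r / 2" using N[of i] by simp
      qed
      finally show ?thesis by simp
    qed
    moreover have "C + real (n - N) * (r / 2) < r * real n"
    proof -
      have "real (n - N) * (r / 2) \<le> real n * (r / 2)" using r by (intro mult_right_mono) auto
      moreover have "C < real n * (r / 2)"
      proof -
        have "2 * C / r < real n" using M nM by linarith
        then show ?thesis using r by (simp add: field_simps)
      qed
      ultimately show ?thesis by (simp add: field_simps)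
    qed
    ultimately show "norm ((\<Sum>i<n. a i) / real n - L) < r"
      using n0 by (simp add: divide_less_eq abs_divide)
  qed
qed

context
  fixes \<beta> :: real assumes b1: "1 < \<beta>"
begin

definition kk :: "nat \<Rightarrow> nat" where "kk n = nat \<lfloor>\<beta> ^ n\<rfloor>"

lemma kk_ge1: "1 \<le> kk n"
proof -
  have "1 \<le> \<beta> ^ n" using b1 by simp
  then show ?thesis unfolding kk_def by (simp add: le_nat_iff one_le_floor)
qed

lemma kk_real: "real (kk n) = of_int \<lfloor>\<beta> ^ n\<rfloor>"
proof -
  have "1 \<le> \<beta> ^ n" using b1 by simp
  then have "0 \<le> \<lfloor>\<beta> ^ n\<rfloor>" by simp
  then show ?thesis unfolding kk_def by simp
qed

lemma kk_le: "real (kk n) \<le> \<beta> ^ n"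
  unfolding kk_real by simp

lemma kk_gt: "\<beta> ^ n - 1 < real (kk n)"
  unfolding kk_real by linarith

lemma kk_half: "\<beta> ^ n / 2 \<le> real (kk n)"
  using kk_gt[of n] kk_ge1[of n] by linarith

lemma kk_mono: "m \<le> n \<Longrightarrow> kk m \<le> kk n"
  unfolding kk_def using b1 by (intro nat_mono floor_mono power_increasing) auto

lemma kk_at_top: "filterlim kk at_top sequentially"
  unfolding filterlim_at_top
proof
  fix Z :: nat
  obtain N where N: "2 * real Z < \<beta> ^ N" using real_arch_pow[OF b1] by blast
  show "eventually (\<lambda>n. Z \<le> kk n) sequentially"
  proof (rule eventually_sequentiallyI[of N])
    fix n assume "N \<le> n"
    then have "\<beta> ^ N \<le> \<beta> ^ n" using b1 by (intro power_increasing) auto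
    then have "real Z \<le> real (kk n)" using N kk_half[of n] by linarith
    then show "Z \<le> kk n" by simp
  qed
qed

lemma kk_ratio: "eventually (\<lambda>p. real (kk (Suc p)) \<le> \<beta>\<^sup>2 * real (kk p)) sequentially"
proof -
  have "eventually (\<lambda>p. \<beta> / (\<beta> - 1) \<le> \<beta> ^ p) sequentially"
  proof -
    obtain N where N: "\<beta> / (\<beta> - 1) < \<beta> ^ N" using real_arch_pow[OF b1] by blast
    show ?thesis
    proof (rule eventually_sequentiallyI[of N])
      fix n assume "N \<le> n"
      then have "\<beta> ^ N \<le> \<beta> ^ n" using b1 by (intro power_increasing) auto
      then show "\<beta> / (\<beta> - 1) \<le> \<beta> ^ n" using N by linarith
    qed
  qed
  then show ?thesis
  proof eventually_elim
    case (elim p)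
    have "\<beta> * \<beta> ^ p \<le> \<beta>\<^sup>2 * (\<beta> ^ p - 1)"
    proof -
      have "\<beta> \<le> (\<beta> - 1) * \<beta> ^ p" using elim b1 by (simp add: field_simps)
      then have "\<beta> * \<beta> \<le> \<beta> * ((\<beta> - 1) * \<beta> ^ p)" using b1 by (intro mult_left_mono) auto
      then show ?thesis by (simp add: power2_eq_square algebra_simps)
    qed
    also have "\<dots> \<le> \<beta>\<^sup>2 * real (kk p)" using kk_gt[of p] by (intro mult_left_mono) auto
    finally show ?case using kk_le[of "Suc p"] by simp
  qed
qed

end


lemma interp:
  fixes y :: "nat \<Rightarrow> real" and \<mu> :: real
  assumes nn: "\<And>i. 0 \<le> y i"
    and lim: "\<And>j::nat. (\<lambda>n. (\<Sum>i<kk (1 + 1 / real (Suc j)) n. y i) / real (kk (1 + 1 / real (Suc j)) n)) \<longlonglongrightarrow> \<mu>"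
  shows "(\<lambda>n. (\<Sum>i<n. y i) / real n) \<longlonglongrightarrow> \<mu>"
proof -
  define S where "S n = (\<Sum>i<n. y i)" for n
  have Smono: "m \<le> n \<Longrightarrow> S m \<le> S n" for m n
    unfolding S_def using nn by (intro sum_mono2) auto
  have S0: "0 \<le> S n" for n unfolding S_def using nn by (intro sum_nonneg) auto
  have mu0: "0 \<le> \<mu>"
    by (rule LIMSEQ_le_const[OF lim[of 0]]) (auto intro!: divide_nonneg_nonneg sum_nonneg nn)
  show ?thesis
  proof (rule LIMSEQ_I)
    fix r :: real assume r: "0 < r"
    define t where "t = r / (2 * (\<mu> + r))"
    have t0: "0 < t" unfolding t_def using r mu0 by auto
    define j where "j = nat \<lceil>3 / t\<rceil>"
    define \<beta> where "\<beta> = 1 + 1 / real (Suc j)"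
    have b1: "1 < \<beta>" unfolding \<beta>_def by simp
    have bt: "\<beta>\<^sup>2 \<le> 1 + t"
    proof -
      have "3 / t \<le> real j" unfolding j_def by linarith
      then have "3 / t < real (Suc j)" by simp
      then have j3: "3 / real (Suc j) < t" using t0 by (simp add: field_simps)
      have "\<beta>\<^sup>2 = 1 + 2 / real (Suc j) + 1 / real (Suc j) * (1 / real (Suc j))"
      proof -
        have "(1 + x)\<^sup>2 = 1 + 2 * x + x * x" for x :: real by (simp add: power2_eq_square algebra_simps)
        then show ?thesis unfolding \<beta>_def by (metis times_divide_eq_right mult.right_neutral)
      qed
      also have "1 / real (Suc j) * (1 / real (Suc j)) \<le> 1 / real (Suc j) * 1"
        by (intro mult_left_mono) auto
      finally show ?thesis using j3 by simp
    qed
    let ?k = "kk \<beta>"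
    define \<eta> where "\<eta> = r / 2"
    have ev: "eventually (\<lambda>p. \<bar>S (?k p) / real (?k p) - \<mu>\<bar> < \<eta>) sequentially"
      using LIMSEQ_D[OF lim[of j], of \<eta>] r unfolding \<eta>_def \<beta>_def[symmetric] S_def
      by (auto simp: eventually_sequentially)
    obtain P where P: "\<And>p. P \<le> p \<Longrightarrow> \<bar>S (?k p) / real (?k p) - \<mu>\<bar> < \<eta> \<and> real (?k (Suc p)) \<le> \<beta>\<^sup>2 * real (?k p)"
      using eventually_conj[OF ev kk_ratio[OF b1]] by (auto simp: eventually_sequentially)
    show "\<exists>no. \<forall>n\<ge>no. norm ((\<Sum>i<n. y i) / real n - \<mu>) < r"
    proof (intro exI[of _ "?k P"] allI impI)
      fix n assume nP: "?k P \<le> n"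
      have n1: "1 \<le> n" using kk_ge1[OF b1, of P] nP by simp
      have exq: "\<exists>q. n < ?k q"
      proof -
        have "eventually (\<lambda>q. Suc n \<le> ?k q) sequentially"
          using kk_at_top[OF b1] unfolding filterlim_at_top by blast
        then obtain N where "\<forall>m\<ge>N. Suc n \<le> ?k m" by (auto simp: eventually_sequentially)
        then have "Suc n \<le> ?k N" by simp
        then show ?thesis by (intro exI[of _ N]) simp
      qed
      define q where "q = (LEAST q. n < ?k q)"
      have nq: "n < ?k q" unfolding q_def by (rule LeastI_ex[OF exq])
      have qP: "P < q"
      proof (rule ccontr)
        assume "\<not> P < q"
        then have "?k q \<le> ?k P" by (intro kk_mono[OF b1]) auto
        then show False using nq nP by simp
      qed
      define p where "p = q - 1"
      have qp: "q = Suc p" unfolding p_def using qP by simp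
      have pP: "P \<le> p" using qP qp by simp
      have kpn: "?k p \<le> n"
      proof (rule ccontr)
        assume "\<not> ?k p \<le> n"
        then have "q \<le> p" unfolding q_def by (intro Least_le) simp
        then show False using qp by simp
      qed
      have kp0: "0 < real (?k p)" using kk_ge1[OF b1, of p] by simp
      have kq0: "0 < real (?k (Suc p))" using kk_ge1[OF b1, of "Suc p"] by simp
      have n0: "0 < real n" using n1 by simp
      have up1: "\<bar>S (?k (Suc p)) / real (?k (Suc p)) - \<mu>\<bar> < \<eta>" using P[of "Suc p"] pP by simp
      have lo1: "\<bar>S (?k p) / real (?k p) - \<mu>\<bar> < \<eta>" using P[of p] pP by simp
      have rat: "real (?k (Suc p)) \<le> \<beta>\<^sup>2 * real (?k p)" using P[of p] pP by simp
      have upper: "S n / real n < \<mu> + r"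
      proof -
        have "S n \<le> S (?k (Suc p))" using nq qp by (intro Smono) simp
        also have "S (?k (Suc p)) < (\<mu> + \<eta>) * real (?k (Suc p))"
        proof -
          have "S (?k (Suc p)) / real (?k (Suc p)) < \<mu> + \<eta>" using up1 by linarith
          then show ?thesis using kq0 by (simp add: pos_divide_less_eq)
        qed
        also have "\<dots> \<le> (\<mu> + \<eta>) * (\<beta>\<^sup>2 * real (?k p))"
          using rat mu0 r unfolding \<eta>_def by (intro mult_left_mono) auto
        also have "\<dots> \<le> (\<mu> + \<eta>) * ((1 + t) * real n)"
          using bt kpn mu0 r t0 unfolding \<eta>_def by (intro mult_left_mono mult_mono) auto
        finally have "S n / real n < (\<mu> + \<eta>) * (1 + t)" using n0 by (simp add: divide_less_eq)
        also have "(\<mu> + \<eta>) * (1 + t) < \<mu> + r"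
        proof -
          have "(\<mu> + \<eta>) * t = (\<mu> + r / 2) * r / (2 * (\<mu> + r))" unfolding t_def \<eta>_def by simp
          also have "\<dots> < r / 2"
            using r mu0 by (simp add: field_simps)
          finally have "(\<mu> + \<eta>) * t < r / 2" .
          moreover have "(\<mu> + \<eta>) * (1 + t) = \<mu> + \<eta> + (\<mu> + \<eta>) * t" by (simp add: distrib_left)
          moreover have "\<eta> = r / 2" by (simp add: \<eta>_def)
          ultimately show ?thesis by linarith
        qed
        finally show ?thesis .
      qed
      have lower: "\<mu> - r < S n / real n"
      proof (cases "\<mu> - \<eta> \<le> 0")
        case True
        have "0 \<le> S n / real n" using S0 n0 by simp
        then show ?thesis using True r unfolding \<eta>_def by linarith
      next
        case False
        have "(\<mu> - \<eta>) * real (?k p) < S (?k p)"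
        proof -
          have "\<mu> - \<eta> < S (?k p) / real (?k p)" using lo1 by linarith
          then show ?thesis using kp0 by (simp add: pos_less_divide_eq)
        qed
        also have "S (?k p) \<le> S n" using kpn by (intro Smono)
        finally have A: "(\<mu> - \<eta>) * real (?k p) < S n" .
        have "real n \<le> \<beta>\<^sup>2 * real (?k p)" using nq qp rat by simp
        also have "\<dots> \<le> (1 + t) * real (?k p)" using bt kp0 by (intro mult_right_mono) auto
        finally have B: "real n / (1 + t) \<le> real (?k p)" using t0 by (simp add: divide_le_eq mult.commute)
        have "(\<mu> - \<eta>) * (real n / (1 + t)) \<le> (\<mu> - \<eta>) * real (?k p)"
          using False B by (intro mult_left_mono) auto
        with A have "(\<mu> - \<eta>) * (real n / (1 + t)) < S n" by linarith
        moreover have "(\<mu> - \<eta>) * (real n / (1 + t)) = ((\<mu> - \<eta>) / (1 + t)) * real n" by simp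
        ultimately have C: "(\<mu> - \<eta>) / (1 + t) < S n / real n"
          using n0 by (simp add: pos_less_divide_eq)
        have "\<mu> - r \<le> (\<mu> - \<eta>) / (1 + t)"
        proof -
          have "(\<mu> - r) * t \<le> (\<mu> + r) * t" using t0 r by (intro mult_right_mono) auto
          also have "(\<mu> + r) * t = r / 2" unfolding t_def using r mu0 by (simp add: field_simps)
          finally have "(\<mu> - r) * (1 + t) \<le> \<mu> - \<eta>" unfolding \<eta>_def by (simp add: algebra_simps)
          then show ?thesis using t0 by (simp add: le_divide_eq)
        qed
        then show ?thesis using C by linarith
      qed
      show "norm ((\<Sum>i<n. y i) / real n - \<mu>) < r" using upper lower unfolding S_def by (simp add: abs_less_iff)
    qed
  qed
qed


definition trunc :: "nat \<Rightarrow> real \<Rightarrow> real" where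
  "trunc i y = (if y \<le> real (Suc i) then y else 0)"

lemma trunc_measurable[measurable]: "trunc i \<in> borel_measurable borel"
  unfolding trunc_def by measurable

lemma trunc_nonneg: "0 \<le> y \<Longrightarrow> 0 \<le> trunc i y"
  unfolding trunc_def by simp

lemma trunc_le: "0 \<le> y \<Longrightarrow> trunc i y \<le> y"
  unfolding trunc_def by simp

lemma trunc_bound: "0 \<le> y \<Longrightarrow> trunc i y \<le> real (Suc i)"
  unfolding trunc_def by simp

locale slln = prob_space +
  fixes Y :: "nat \<Rightarrow> 'a \<Rightarrow> real"
  assumes Ym[measurable]: "\<And>i. Y i \<in> borel_measurable M"
    and Ynn: "\<And>i x. 0 \<le> Y i x"
    and Yind: "\<And>i j. i \<noteq> j \<Longrightarrow> indep_var borel (Y i) borel (Y j)"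
    and Yid: "\<And>i. distr M borel (Y i) = distr M borel (Y 0)"
    and Yint: "integrable M (Y 0)"
begin

lemma transfer_integral:
  fixes g :: "real \<Rightarrow> real"
  assumes [measurable]: "g \<in> borel_measurable borel"
  shows "expectation (\<lambda>x. g (Y i x)) = expectation (\<lambda>x. g (Y 0 x))"
proof -
  have "expectation (\<lambda>x. g (Y i x)) = integral\<^sup>L (distr M borel (Y i)) g"
    by (rule integral_distr[of "Y i" M borel g, symmetric]) auto
  also have "\<dots> = integral\<^sup>L (distr M borel (Y 0)) g" by (simp add: Yid[of i])
  also have "\<dots> = expectation (\<lambda>x. g (Y 0 x))" by (rule integral_distr[of "Y 0" M borel g]) auto
  finally show ?thesis .
qed

lemma transfer_nn_integral:
  assumes [measurable]: "g \<in> borel_measurable borel"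
  shows "(\<integral>\<^sup>+x. g (Y i x) \<partial>M) = (\<integral>\<^sup>+x. g (Y 0 x) \<partial>M)"
proof -
  have "(\<integral>\<^sup>+x. g (Y i x) \<partial>M) = integral\<^sup>N (distr M borel (Y i)) g"
    by (rule nn_integral_distr[of "Y i" M borel g, symmetric]) auto
  also have "\<dots> = integral\<^sup>N (distr M borel (Y 0)) g" by (simp add: Yid[of i])
  also have "\<dots> = (\<integral>\<^sup>+x. g (Y 0 x) \<partial>M)" by (rule nn_integral_distr[of "Y 0" M borel g]) auto
  finally show ?thesis .
qed

lemma transfer_emeasure:
  assumes [measurable]: "A \<in> sets borel"
  shows "emeasure M {x \<in> space M. Y i x \<in> A} = emeasure M {x \<in> space M. Y 0 x \<in> A}"
proof -
  have "emeasure M {x \<in> space M. Y i x \<in> A} = emeasure (distr M borel (Y i)) A"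
    by (subst emeasure_distr) (auto intro!: arg_cong[where f="emeasure M"])
  also have "\<dots> = emeasure (distr M borel (Y 0)) A" by (simp add: Yid[of i])
  also have "\<dots> = emeasure M {x \<in> space M. Y 0 x \<in> A}"
    by (subst emeasure_distr) (auto intro!: arg_cong[where f="emeasure M"])
  finally show ?thesis .
qed

definition Z :: "nat \<Rightarrow> 'a \<Rightarrow> real" where "Z i x = trunc i (Y i x)"

lemma Zm[measurable]: "Z i \<in> borel_measurable M"
  unfolding Z_def by measurable

lemma Z_nonneg: "0 \<le> Z i x" unfolding Z_def by (rule trunc_nonneg[OF Ynn])
lemma Z_bound: "Z i x \<le> real (Suc i)" unfolding Z_def by (rule trunc_bound[OF Ynn])

lemma Z_int: "integrable M (Z i)"
proof (rule integrable_const_bound[where B="real (Suc i)"])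
  show "AE x in M. norm (Z i x) \<le> real (Suc i)"
    using Z_nonneg Z_bound by (intro AE_I2) simp
qed simp

lemma Z_int_sq: "integrable M (\<lambda>x. (Z i x)\<^sup>2)"
proof (rule integrable_const_bound[where B="(real (Suc i))\<^sup>2"])
  show "AE x in M. norm ((Z i x)\<^sup>2) \<le> (real (Suc i))\<^sup>2"
    using Z_nonneg Z_bound by (intro AE_I2) (simp add: power_mono)
qed simp

definition m :: "nat \<Rightarrow> real" where "m i = expectation (Z i)"

lemma W_indep:
  assumes "i \<noteq> j"
  shows "indep_var borel (\<lambda>x. Z i x - m i) borel (\<lambda>x. Z j x - m j)"
proof -
  have "indep_var borel ((\<lambda>y. trunc i y - m i) \<circ> Y i) borel ((\<lambda>y. trunc j y - m j) \<circ> Y j)"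
    by (rule indep_var_compose[OF Yind[OF assms]]) auto
  then show ?thesis by (simp add: comp_def Z_def)
qed

lemma W_mean: "expectation (\<lambda>x. Z i x - m i) = 0"
  using Z_int[of i] by (simp add: m_def prob_space)

lemma var_sum:
  "expectation (\<lambda>x. (\<Sum>i<n. Z i x - m i)\<^sup>2) \<le> (\<Sum>i<n. expectation (\<lambda>x. (Z i x)\<^sup>2))"
proof -
  let ?W = "\<lambda>i x. Z i x - m i"
  have Wint: "integrable M (?W i)" for i using Z_int[of i] by simp
  have WWint: "integrable M (\<lambda>x. ?W i x * ?W j x)" for i j
  proof (rule integrable_const_bound[where B="(real (Suc i) + \<bar>m i\<bar>) * (real (Suc j) + \<bar>m j\<bar>)"])
    show "AE x in M. norm (?W i x * ?W j x) \<le> (real (Suc i) + \<bar>m i\<bar>) * (real (Suc j) + \<bar>m j\<bar>)"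
    proof (intro AE_I2)
      fix x
      have a: "\<bar>?W i x\<bar> \<le> real (Suc i) + \<bar>m i\<bar>" unfolding abs_le_iff using Z_nonneg[of i x] Z_bound[of i x] abs_ge_self[of "m i"] abs_ge_minus_self[of "m i"] by (intro conjI; linarith)
      have b: "\<bar>?W j x\<bar> \<le> real (Suc j) + \<bar>m j\<bar>" unfolding abs_le_iff using Z_nonneg[of j x] Z_bound[of j x] abs_ge_self[of "m j"] abs_ge_minus_self[of "m j"] by (intro conjI; linarith)
      show "norm (?W i x * ?W j x) \<le> (real (Suc i) + \<bar>m i\<bar>) * (real (Suc j) + \<bar>m j\<bar>)"
        unfolding real_norm_def abs_mult by (intro mult_mono a b) auto
    qed
  qed simp
  have off: "expectation (\<lambda>x. ?W i x * ?W j x) = 0" if "i \<noteq> j" for i j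
    using indep_var_lebesgue_integral[OF W_indep[OF that] Wint Wint] W_mean by simp
  have "expectation (\<lambda>x. (\<Sum>i<n. ?W i x)\<^sup>2) = expectation (\<lambda>x. \<Sum>i<n. \<Sum>j<n. ?W i x * ?W j x)"
    by (simp add: power2_eq_square sum_product)
  also have "\<dots> = (\<Sum>i<n. \<Sum>j<n. expectation (\<lambda>x. ?W i x * ?W j x))"
    by (simp add: Bochner_Integration.integral_sum WWint)
  also have "\<dots> = (\<Sum>i<n. expectation (\<lambda>x. ?W i x * ?W i x))"
  proof (rule sum.cong[OF refl])
    fix i assume i: "i \<in> {..<n}"
    have "(\<Sum>j<n. expectation (\<lambda>x. ?W i x * ?W j x)) = (\<Sum>j<n. if j = i then expectation (\<lambda>x. ?W i x * ?W i x) else 0)"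
      by (intro sum.cong refl) (auto simp: off)
    also have "\<dots> = expectation (\<lambda>x. ?W i x * ?W i x)" using i by simp
    finally show "(\<Sum>j<n. expectation (\<lambda>x. ?W i x * ?W j x)) = expectation (\<lambda>x. ?W i x * ?W i x)" .
  qed
  also have "\<dots> \<le> (\<Sum>i<n. expectation (\<lambda>x. (Z i x)\<^sup>2))"
  proof (rule sum_mono)
    fix i
    have "expectation (\<lambda>x. ?W i x * ?W i x) = variance (Z i)"
      by (simp add: m_def power2_eq_square)
    also have "\<dots> = expectation (\<lambda>x. (Z i x)\<^sup>2) - (expectation (Z i))\<^sup>2"
      by (rule variance_eq[OF Z_int Z_int_sq])
    finally show "expectation (\<lambda>x. ?W i x * ?W i x) \<le> expectation (\<lambda>x. (Z i x)\<^sup>2)" by simp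
  qed
  finally show ?thesis .
qed

end


lemma geo_bound:
  fixes \<beta> y :: real
  assumes b1: "1 < \<beta>" and y0: "0 \<le> y"
  shows "(\<Sum>n. ennreal (y\<^sup>2 * of_bool (y \<le> \<beta> ^ n) / \<beta> ^ n)) \<le> ennreal (y * \<beta> / (\<beta> - 1))"
proof -
  have ex: "\<exists>n. y \<le> \<beta> ^ n" using real_arch_pow[OF b1, of y] by (auto intro: less_imp_le)
  define n0 where "n0 = (LEAST n. y \<le> \<beta> ^ n)"
  have yn0: "y \<le> \<beta> ^ n0" unfolding n0_def by (rule LeastI_ex[OF ex])
  define r where "r = 1 / \<beta>"
  have r0: "0 < r" "r < 1" unfolding r_def using b1 by auto
  define g where "g n = (if n0 \<le> n then ennreal (y * r ^ (n - n0)) else 0)" for n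
  have fg: "ennreal (y\<^sup>2 * of_bool (y \<le> \<beta> ^ n) / \<beta> ^ n) \<le> g n" for n
  proof (cases "y \<le> \<beta> ^ n")
    case True
    then have nn0: "n0 \<le> n" unfolding n0_def by (rule Least_le)
    have bpos: "0 < \<beta> ^ n0" "0 < \<beta> ^ (n - n0)" using b1 by auto
    have bn: "\<beta> ^ n = \<beta> ^ n0 * \<beta> ^ (n - n0)" using nn0 by (simp add: power_add[symmetric])
    have "y\<^sup>2 / \<beta> ^ n = y * ((y / \<beta> ^ n0) * (1 / \<beta> ^ (n - n0)))"
      unfolding bn by (simp add: power2_eq_square)
    also have "\<dots> \<le> y * (1 * (1 / \<beta> ^ (n - n0)))"
      using yn0 bpos y0 by (intro mult_left_mono mult_right_mono) (auto simp: divide_le_eq)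
    also have "\<dots> = y * r ^ (n - n0)" unfolding r_def by (simp add: power_one_over)
    finally show ?thesis using True nn0 unfolding g_def by (simp add: ennreal_leI)
  next
    case False
    then show ?thesis by simp
  qed
  have "(\<Sum>n. ennreal (y\<^sup>2 * of_bool (y \<le> \<beta> ^ n) / \<beta> ^ n)) \<le> (\<Sum>n. g n)"
    by (intro suminf_le fg) auto
  also have "(\<Sum>n. g n) = (\<Sum>j. g (j + n0)) + (\<Sum>j<n0. g j)"
    by (rule suminf_offset) simp
  also have "(\<Sum>j<n0. g j) = 0" unfolding g_def by simp
  also have "(\<Sum>j. g (j + n0)) = (\<Sum>j. ennreal (y * r ^ j))" unfolding g_def by simp
  also have "\<dots> = ennreal (\<Sum>j. y * r ^ j)"
    using r0 y0 by (intro suminf_ennreal2) (auto intro!: summable_mult summable_geometric)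
  also have "(\<Sum>j. y * r ^ j) = y * (1 / (1 - r))"
    using r0 by (simp add: suminf_mult suminf_geometric summable_geometric)
  also have "y * (1 / (1 - r)) = y * \<beta> / (\<beta> - 1)" unfolding r_def using b1 by (simp add: field_simps)
  finally show ?thesis by simp
qed

lemma tail_count_bound:
  fixes y :: real assumes y0: "0 \<le> y"
  shows "(\<Sum>i. ennreal (of_bool (real (Suc i) < y))) \<le> ennreal y"
proof -
  have "(\<Sum>i<N. of_bool (real (Suc i) < y)) \<le> y" for N
  proof (induction N)
    case 0 then show ?case using y0 by simp
  next
    case (Suc N)
    show ?case
    proof (cases "real (Suc N) < y")
      case True
      have "(\<Sum>i<Suc N. of_bool (real (Suc i) < y) :: real) \<le> (\<Sum>i<Suc N. 1)"
        by (intro sum_mono) auto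
      then show ?thesis using True by simp
    next
      case False
      then show ?thesis using Suc.IH by simp
    qed
  qed
  then have "(\<Sum>i<N. ennreal (of_bool (real (Suc i) < y))) \<le> ennreal y" for N
    by (simp add: ennreal_leI sum_ennreal)
  then show ?thesis by (intro suminf_le_const) auto
qed


context slln
begin

lemma Y0_nn_finite: "(\<integral>\<^sup>+x. ennreal (Y 0 x) \<partial>M) < \<infinity>"
  using integrableD(2)[OF Yint] by (simp add: less_top)

lemma emeasure_as_nn:
  assumes [measurable]: "Measurable.pred M P"
  shows "emeasure M {x \<in> space M. P x} = (\<integral>\<^sup>+x. ennreal (of_bool (P x)) \<partial>M)"
proof -
  have "emeasure M {x \<in> space M. P x} = (\<integral>\<^sup>+x. indicator {x \<in> space M. P x} x \<partial>M)"
    by (rule nn_integral_indicator[symmetric]) simp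
  also have "\<dots> = (\<integral>\<^sup>+x. ennreal (of_bool (P x)) \<partial>M)"
    by (intro nn_integral_cong) (auto simp: indicator_def)
  finally show ?thesis .
qed

lemma trunc_eventually: "AE x in M. eventually (\<lambda>i. Y i x = Z i x) sequentially"
proof -
  define A where "A i = {x \<in> space M. real (Suc i) < Y i x}" for i
  have A[measurable]: "A i \<in> events" for i unfolding A_def by measurable
  have eqA: "emeasure M (A i) = (\<integral>\<^sup>+x. ennreal (of_bool (real (Suc i) < Y 0 x)) \<partial>M)" for i
  proof -
    have "emeasure M (A i) = emeasure M {x \<in> space M. Y i x \<in> {real (Suc i)<..}}"
      unfolding A_def by simp
    also have "\<dots> = emeasure M {x \<in> space M. Y 0 x \<in> {real (Suc i)<..}}"
      by (rule transfer_emeasure) simp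
    also have "\<dots> = (\<integral>\<^sup>+x. ennreal (of_bool (real (Suc i) < Y 0 x)) \<partial>M)"
      by (subst emeasure_as_nn[symmetric]) auto
    finally show ?thesis .
  qed
  have "(\<Sum>i. emeasure M (A i)) = (\<integral>\<^sup>+x. (\<Sum>i. ennreal (of_bool (real (Suc i) < Y 0 x))) \<partial>M)"
    unfolding eqA by (rule nn_integral_suminf[symmetric]) simp
  also have "\<dots> \<le> (\<integral>\<^sup>+x. ennreal (Y 0 x) \<partial>M)"
    by (intro nn_integral_mono tail_count_bound Ynn)
  also have "\<dots> < \<infinity>" by (rule Y0_nn_finite)
  finally have "(\<Sum>i. emeasure M (A i)) < \<infinity>" .
  from borel_cantelli[OF A this]
  show ?thesis
  proof (rule AE_mp, intro AE_I2 impI)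
    fix x assume x: "x \<in> space M" and ev: "eventually (\<lambda>i. x \<notin> A i) sequentially"
    show "eventually (\<lambda>i. Y i x = Z i x) sequentially"
      using ev by eventually_elim (use x in \<open>auto simp: A_def Z_def trunc_def\<close>)
  qed
qed

definition Sp :: "nat \<Rightarrow> 'a \<Rightarrow> real" where "Sp n x = (\<Sum>i<n. Z i x)"
definition ESp :: "nat \<Rightarrow> real" where "ESp n = (\<Sum>i<n. m i)"

lemma Sp_m[measurable]: "Sp n \<in> borel_measurable M" unfolding Sp_def by measurable

lemma EZ2: "expectation (\<lambda>x. (Z i x)\<^sup>2) = expectation (\<lambda>x. (trunc i (Y 0 x))\<^sup>2)"
  unfolding Z_def by (rule transfer_integral[of "\<lambda>y. (trunc i y)\<^sup>2"]) simp

lemma cheb: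
  assumes a: "0 < a"
  shows "prob {x \<in> space M. a \<le> \<bar>Sp n x - ESp n\<bar>} \<le> (\<Sum>i<n. expectation (\<lambda>x. (trunc i (Y 0 x))\<^sup>2)) / a\<^sup>2"
proof -
  have int2: "integrable M (\<lambda>x. (Sp n x)\<^sup>2)"
  proof (rule integrable_const_bound[where B="(\<Sum>i<n. real (Suc i))\<^sup>2"])
    show "AE x in M. norm ((Sp n x)\<^sup>2) \<le> (\<Sum>i<n. real (Suc i))\<^sup>2"
    proof (intro AE_I2)
      fix x
      have "0 \<le> Sp n x" unfolding Sp_def by (intro sum_nonneg Z_nonneg)
      moreover have "Sp n x \<le> (\<Sum>i<n. real (Suc i))" unfolding Sp_def by (intro sum_mono Z_bound)
      ultimately show "norm ((Sp n x)\<^sup>2) \<le> (\<Sum>i<n. real (Suc i))\<^sup>2" by (simp add: power_mono)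
    qed
  qed simp
  have ESp: "expectation (Sp n) = ESp n"
    unfolding Sp_def ESp_def m_def by (rule Bochner_Integration.integral_sum) (rule Z_int)
  have "prob {x \<in> space M. a \<le> \<bar>Sp n x - ESp n\<bar>} \<le> variance (Sp n) / a\<^sup>2"
    using Chebyshev_inequality[OF _ int2 a] ESp by simp
  also have "variance (Sp n) = expectation (\<lambda>x. (\<Sum>i<n. Z i x - m i)\<^sup>2)"
    unfolding ESp Sp_def ESp_def by (simp add: sum_subtractf)
  also have "\<dots> \<le> (\<Sum>i<n. expectation (\<lambda>x. (Z i x)\<^sup>2))" by (rule var_sum)
  finally show ?thesis using a by (simp add: EZ2 divide_right_mono)
qed

end


lemma pw_bound:
  fixes \<beta> y \<epsilon> :: real
  assumes b1: "1 < \<beta>" and y0: "0 \<le> y" and e: "0 < \<epsilon>"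
  shows "(\<Sum>i<kk \<beta> n. (trunc i y)\<^sup>2) / (\<epsilon> * real (kk \<beta> n))\<^sup>2
      \<le> (2 / \<epsilon>\<^sup>2) * (y\<^sup>2 * of_bool (y \<le> \<beta> ^ n) / \<beta> ^ n)"
proof -
  let ?k = "kk \<beta> n"
  have k0: "0 < real ?k" using kk_ge1[OF b1, of n] by simp
  have bpos: "0 < \<beta> ^ n" using b1 by simp
  have each: "(trunc i y)\<^sup>2 \<le> y\<^sup>2 * of_bool (y \<le> \<beta> ^ n)" if "i < ?k" for i
  proof (cases "y \<le> real (Suc i)")
    case True
    have "real (Suc i) \<le> real ?k" using that by simp
    also have "\<dots> \<le> \<beta> ^ n" by (rule kk_le[OF b1])
    finally show ?thesis using True unfolding trunc_def by simp
  next
    case False then show ?thesis unfolding trunc_def by simp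
  qed
  have "(\<Sum>i<?k. (trunc i y)\<^sup>2) \<le> (\<Sum>i<?k. y\<^sup>2 * of_bool (y \<le> \<beta> ^ n))"
    by (intro sum_mono each) simp
  also have "\<dots> = real ?k * (y\<^sup>2 * of_bool (y \<le> \<beta> ^ n))" by simp
  finally have A: "(\<Sum>i<?k. (trunc i y)\<^sup>2) \<le> real ?k * (y\<^sup>2 * of_bool (y \<le> \<beta> ^ n))" .
  define c where "c = y\<^sup>2 * of_bool (y \<le> \<beta> ^ n)"
  have c0: "0 \<le> c" unfolding c_def by simp
  have "(\<Sum>i<?k. (trunc i y)\<^sup>2) / (\<epsilon> * real ?k)\<^sup>2 \<le> real ?k * c / (\<epsilon> * real ?k)\<^sup>2"
    using A unfolding c_def by (intro divide_right_mono) auto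
  also have "\<dots> = c / (\<epsilon>\<^sup>2 * real ?k)" using k0 by (simp add: power2_eq_square field_simps)
  also have "\<dots> \<le> c / (\<epsilon>\<^sup>2 * (\<beta> ^ n / 2))"
    using kk_half[OF b1, of n] e bpos c0 by (intro divide_left_mono mult_left_mono mult_pos_pos) auto
  also have "\<dots> = (2 / \<epsilon>\<^sup>2) * (c / \<beta> ^ n)" using e bpos by (simp add: field_simps)
  finally show ?thesis unfolding c_def .
qed

context slln
begin

lemma sum_prob_bound:
  assumes b1: "1 < \<beta>" and e: "0 < \<epsilon>"
  shows "(\<Sum>n. emeasure M {x \<in> space M. \<epsilon> * real (kk \<beta> n) \<le> \<bar>Sp (kk \<beta> n) x - ESp (kk \<beta> n)\<bar>}) < \<infinity>"
proof -
  define c where "c = 2 / \<epsilon>\<^sup>2"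
  have c0: "0 \<le> c" unfolding c_def by simp
  define f where "f n y = y\<^sup>2 * of_bool (y \<le> \<beta> ^ n) / \<beta> ^ n" for n and y :: real
  have f0: "0 \<le> f n y" for n y unfolding f_def using b1 by simp
  have fm[measurable]: "f n \<in> borel_measurable borel" for n unfolding f_def by measurable
  have termb: "emeasure M {x \<in> space M. \<epsilon> * real (kk \<beta> n) \<le> \<bar>Sp (kk \<beta> n) x - ESp (kk \<beta> n)\<bar>}
      \<le> (\<integral>\<^sup>+x. ennreal c * ennreal (f n (Y 0 x)) \<partial>M)" for n
  proof -
    let ?k = "kk \<beta> n"
    let ?a = "\<epsilon> * real ?k"
    have a0: "0 < ?a" using e kk_ge1[OF b1, of n] by simp
    let ?h = "\<lambda>x. (\<Sum>i<?k. (trunc i (Y 0 x))\<^sup>2) / ?a\<^sup>2"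
    have hint: "integrable M ?h"
    proof (rule integrable_const_bound[where B="(\<Sum>i<?k. (real (Suc i))\<^sup>2) / ?a\<^sup>2"])
      show "AE x in M. norm (?h x) \<le> (\<Sum>i<?k. (real (Suc i))\<^sup>2) / ?a\<^sup>2"
      proof (intro AE_I2)
        fix x
        have "(\<Sum>i<?k. (trunc i (Y 0 x))\<^sup>2) \<le> (\<Sum>i<?k. (real (Suc i))\<^sup>2)"
          by (intro sum_mono power_mono trunc_bound trunc_nonneg Ynn)
        moreover have "0 \<le> (\<Sum>i<?k. (trunc i (Y 0 x))\<^sup>2)" by (intro sum_nonneg) simp
        ultimately show "norm (?h x) \<le> (\<Sum>i<?k. (real (Suc i))\<^sup>2) / ?a\<^sup>2"
          by (simp add: divide_right_mono)
      qed
    qed simp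
    have "emeasure M {x \<in> space M. ?a \<le> \<bar>Sp ?k x - ESp ?k\<bar>} = ennreal (prob {x \<in> space M. ?a \<le> \<bar>Sp ?k x - ESp ?k\<bar>})"
      by (rule emeasure_eq_measure)
    also have "\<dots> \<le> ennreal ((\<Sum>i<?k. expectation (\<lambda>x. (trunc i (Y 0 x))\<^sup>2)) / ?a\<^sup>2)"
      by (intro ennreal_leI cheb a0)
    also have "(\<Sum>i<?k. expectation (\<lambda>x. (trunc i (Y 0 x))\<^sup>2)) / ?a\<^sup>2 = expectation ?h"
    proof -
      have "(\<Sum>i<?k. expectation (\<lambda>x. (trunc i (Y 0 x))\<^sup>2)) = expectation (\<lambda>x. \<Sum>i<?k. (trunc i (Y 0 x))\<^sup>2)"
      proof (rule Bochner_Integration.integral_sum[symmetric])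
        fix i show "integrable M (\<lambda>x. (trunc i (Y 0 x))\<^sup>2)"
        proof (rule integrable_const_bound[where B="(real (Suc i))\<^sup>2"])
          show "AE x in M. norm ((trunc i (Y 0 x))\<^sup>2) \<le> (real (Suc i))\<^sup>2"
            using trunc_bound[OF Ynn, of i 0] by (intro AE_I2) (simp add: power_mono trunc_nonneg Ynn)
        qed simp
      qed
      then show ?thesis by simp
    qed
    also have "ennreal (expectation ?h) = (\<integral>\<^sup>+x. ennreal (?h x) \<partial>M)"
      by (rule nn_integral_eq_integral[symmetric, OF hint]) (auto intro!: AE_I2 divide_nonneg_nonneg sum_nonneg)
    also have "\<dots> \<le> (\<integral>\<^sup>+x. ennreal c * ennreal (f n (Y 0 x)) \<partial>M)"
    proof (intro nn_integral_mono)
      fix x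
      have "?h x \<le> c * f n (Y 0 x)" unfolding c_def f_def by (rule pw_bound[OF b1 Ynn e])
      then show "ennreal (?h x) \<le> ennreal c * ennreal (f n (Y 0 x))"
        using c0 f0 by (simp add: ennreal_mult[symmetric] ennreal_leI)
    qed
    finally show ?thesis .
  qed
  have "(\<Sum>n. emeasure M {x \<in> space M. \<epsilon> * real (kk \<beta> n) \<le> \<bar>Sp (kk \<beta> n) x - ESp (kk \<beta> n)\<bar>})
      \<le> (\<Sum>n. \<integral>\<^sup>+x. ennreal c * ennreal (f n (Y 0 x)) \<partial>M)"
    by (intro suminf_le termb) auto
  also have "\<dots> = (\<integral>\<^sup>+x. (\<Sum>n. ennreal c * ennreal (f n (Y 0 x))) \<partial>M)"
    by (rule nn_integral_suminf[symmetric]) simp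
  also have "\<dots> \<le> (\<integral>\<^sup>+x. ennreal c * ennreal (\<beta> / (\<beta> - 1)) * ennreal (Y 0 x) \<partial>M)"
  proof (intro nn_integral_mono)
    fix x
    have "(\<Sum>n. ennreal c * ennreal (f n (Y 0 x))) = ennreal c * (\<Sum>n. ennreal (f n (Y 0 x)))"
      by simp
    also have "\<dots> \<le> ennreal c * ennreal (Y 0 x * \<beta> / (\<beta> - 1))"
      unfolding f_def by (intro mult_left_mono geo_bound[OF b1 Ynn]) simp
    also have "\<dots> = ennreal c * ennreal (\<beta> / (\<beta> - 1)) * ennreal (Y 0 x)"
    proof -
      have "Y 0 x * \<beta> / (\<beta> - 1) = (\<beta> / (\<beta> - 1)) * Y 0 x" by simp
      moreover have "ennreal ((\<beta> / (\<beta> - 1)) * Y 0 x) = ennreal (\<beta> / (\<beta> - 1)) * ennreal (Y 0 x)"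
        using b1 Ynn[of 0 x] by (intro ennreal_mult) auto
      ultimately have "ennreal (Y 0 x * \<beta> / (\<beta> - 1)) = ennreal (\<beta> / (\<beta> - 1)) * ennreal (Y 0 x)"
        by metis
      then show ?thesis by (simp add: mult.assoc)
    qed
    finally show "(\<Sum>n. ennreal c * ennreal (f n (Y 0 x))) \<le> ennreal c * ennreal (\<beta> / (\<beta> - 1)) * ennreal (Y 0 x)" .
  qed
  also have "\<dots> = ennreal c * ennreal (\<beta> / (\<beta> - 1)) * (\<integral>\<^sup>+x. ennreal (Y 0 x) \<partial>M)"
    by (rule nn_integral_cmult) simp
  also have "\<dots> < \<infinity>"
    using Y0_nn_finite by (simp add: ennreal_mult_eq_top_iff less_top[symmetric])
  finally show ?thesis .
qed

end


context slln
begin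

lemma m_lim: "m \<longlonglongrightarrow> expectation (Y 0)"
proof -
  have eq: "m i = expectation (\<lambda>x. trunc i (Y 0 x))" for i
    unfolding m_def Z_def by (rule transfer_integral) simp
  have "(\<lambda>i. expectation (\<lambda>x. trunc i (Y 0 x))) \<longlonglongrightarrow> expectation (Y 0)"
  proof (rule integral_dominated_convergence[where w="Y 0"])
    show "AE x in M. (\<lambda>i. trunc i (Y 0 x)) \<longlonglongrightarrow> Y 0 x"
    proof (intro AE_I2 tendsto_eventually)
      fix x
      obtain N :: nat where N: "Y 0 x \<le> real N" using real_arch_simple by blast
      show "eventually (\<lambda>i. trunc i (Y 0 x) = Y 0 x) sequentially"
        by (rule eventually_sequentiallyI[of N]) (use N in \<open>auto simp: trunc_def\<close>)
    qed
    show "AE x in M. norm (trunc i (Y 0 x)) \<le> Y 0 x" for i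
      by (intro AE_I2) (simp add: trunc_nonneg trunc_le Ynn)
  qed (auto simp: Yint)
  moreover have "m = (\<lambda>i. expectation (\<lambda>x. trunc i (Y 0 x)))" by (rule ext) (rule eq)
  ultimately show ?thesis by simp
qed

lemma sub_conv:
  assumes b1: "1 < \<beta>"
  shows "AE x in M. (\<lambda>n. (\<Sum>i<kk \<beta> n. Y i x) / real (kk \<beta> n)) \<longlonglongrightarrow> expectation (Y 0)"
proof -
  let ?k = "kk \<beta>"
  have ev: "AE x in M. eventually (\<lambda>n. \<bar>Sp (?k n) x - ESp (?k n)\<bar> < (1 / real (Suc j)) * real (?k n)) sequentially" for j
  proof -
    define A where "A n = {x \<in> space M. (1 / real (Suc j)) * real (?k n) \<le> \<bar>Sp (?k n) x - ESp (?k n)\<bar>}" for n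
    have A[measurable]: "A n \<in> events" for n unfolding A_def by measurable
    have "(\<Sum>n. emeasure M (A n)) < \<infinity>" unfolding A_def by (rule sum_prob_bound[OF b1]) simp
    from borel_cantelli[OF A this] show ?thesis
    proof (rule AE_mp, intro AE_I2 impI)
      fix x assume x: "x \<in> space M" and ev: "eventually (\<lambda>n. x \<notin> A n) sequentially"
      from ev show "eventually (\<lambda>n. \<bar>Sp (?k n) x - ESp (?k n)\<bar> < (1 / real (Suc j)) * real (?k n)) sequentially"
        by eventually_elim (use x in \<open>auto simp: A_def\<close>)
    qed
  qed
  then have "AE x in M. \<forall>j. eventually (\<lambda>n. \<bar>Sp (?k n) x - ESp (?k n)\<bar> < (1 / real (Suc j)) * real (?k n)) sequentially"
    by (simp add: AE_all_countable)
  moreover note trunc_eventually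
  ultimately show ?thesis
  proof (eventually_elim)
    case (elim x)
    have L1: "(\<lambda>n. (Sp (?k n) x - ESp (?k n)) / real (?k n)) \<longlonglongrightarrow> 0"
    proof (rule LIMSEQ_I)
      fix r :: real assume r: "0 < r"
      obtain j :: nat where j: "1 / real (Suc j) < r"
        using reals_Archimedean[OF r] by (auto simp: inverse_eq_divide)
      from elim(1)[rule_format, of j] obtain N where
        N: "\<And>n. N \<le> n \<Longrightarrow> \<bar>Sp (?k n) x - ESp (?k n)\<bar> < (1 / real (Suc j)) * real (?k n)"
        by (auto simp: eventually_sequentially)
      show "\<exists>no. \<forall>n\<ge>no. norm ((Sp (?k n) x - ESp (?k n)) / real (?k n) - 0) < r"
      proof (intro exI[of _ N] allI impI)
        fix n assume "N \<le> n"
        have k0: "0 < real (?k n)" using kk_ge1[OF b1, of n] by simp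
        have "\<bar>Sp (?k n) x - ESp (?k n)\<bar> / real (?k n) < 1 / real (Suc j)"
          using N[OF \<open>N \<le> n\<close>] k0 by (simp add: pos_divide_less_eq)
        then show "norm ((Sp (?k n) x - ESp (?k n)) / real (?k n) - 0) < r"
          using j by (simp add: abs_divide)
      qed
    qed
    have L2: "(\<lambda>n. ESp (?k n) / real (?k n)) \<longlonglongrightarrow> expectation (Y 0)"
    proof -
      have "(\<lambda>n. (\<Sum>i<n. m i) / real n) \<longlonglongrightarrow> expectation (Y 0)" by (rule cesaro[OF m_lim])
      from filterlim_compose[OF this kk_at_top[OF b1]] show ?thesis by (simp add: ESp_def)
    qed
    obtain N where N: "\<And>i. N \<le> i \<Longrightarrow> Y i x = Z i x" using elim(2) by (auto simp: eventually_sequentially)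
    define C where "C = (\<Sum>i<N. Y i x - Z i x)"
    have L3: "(\<lambda>n. C / real (?k n)) \<longlonglongrightarrow> 0"
      using filterlim_compose[OF lim_const_over_n[of C] kk_at_top[OF b1]] by simp
    have eqS: "eventually (\<lambda>n. (\<Sum>i<?k n. Y i x) / real (?k n)
        = (Sp (?k n) x - ESp (?k n)) / real (?k n) + ESp (?k n) / real (?k n) + C / real (?k n)) sequentially"
    proof -
      have "eventually (\<lambda>n. N \<le> ?k n) sequentially" using kk_at_top[OF b1] by (simp add: filterlim_at_top)
      then show ?thesis
      proof eventually_elim
        case (elim n)
        have "(\<Sum>i<?k n. Y i x) = Sp (?k n) x + C"
        proof -
          have split: "{..<?k n} = {..<N} \<union> {N..<?k n}" using elim by auto
          have "(\<Sum>i<?k n. Y i x - Z i x) = (\<Sum>i<N. Y i x - Z i x) + (\<Sum>i\<in>{N..<?k n}. Y i x - Z i x)"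
            unfolding split by (subst sum.union_disjoint) auto
          also have "(\<Sum>i\<in>{N..<?k n}. Y i x - Z i x) = 0" using N by simp
          finally show ?thesis unfolding C_def Sp_def by (simp add: sum_subtractf)
        qed
        then show ?case by (simp add: add_divide_distrib diff_divide_distrib)
      qed
    qed
    have "(\<lambda>n. (Sp (?k n) x - ESp (?k n)) / real (?k n) + ESp (?k n) / real (?k n) + C / real (?k n))
        \<longlonglongrightarrow> 0 + expectation (Y 0) + 0"
      by (intro tendsto_add L1 L2 L3)
    then show ?case using eqS by (simp add: tendsto_cong)
  qed
qed

theorem slln_thm: "AE x in M. (\<lambda>n. (\<Sum>i<n. Y i x) / real n) \<longlonglongrightarrow> expectation (Y 0)"
proof -
  have "AE x in M. \<forall>j::nat. (\<lambda>n. (\<Sum>i<kk (1 + 1 / real (Suc j)) n. Y i x) / real (kk (1 + 1 / real (Suc j)) n)) \<longlonglongrightarrow> expectation (Y 0)"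
    unfolding AE_all_countable by (intro allI sub_conv) simp
  then show ?thesis
  proof (rule AE_mp, intro AE_I2 impI)
    fix x assume "\<forall>j::nat. (\<lambda>n. (\<Sum>i<kk (1 + 1 / real (Suc j)) n. Y i x) / real (kk (1 + 1 / real (Suc j)) n)) \<longlonglongrightarrow> expectation (Y 0)"
    then show "(\<lambda>n. (\<Sum>i<n. Y i x) / real n) \<longlonglongrightarrow> expectation (Y 0)"
      by (intro interp[where y="\<lambda>i. Y i x"]) (auto simp: Ynn)
  qed
qed

end


lemma GC_det:
  fixes F Fl :: "real \<Rightarrow> real" and Gn Gl :: "nat \<Rightarrow> real \<Rightarrow> real"
  assumes F: "distribution_function F"
    and P1: "\<And>z y. z < y \<Longrightarrow> F z \<le> Fl y"
    and P2: "\<And>p. 0 < p \<Longrightarrow> p < 1 \<Longrightarrow> Fl (VaR p F) \<le> p"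
    and G1: "\<And>t z y. z < y \<Longrightarrow> Gn t z \<le> Gl t y"
    and G2: "\<And>t z y. z \<le> y \<Longrightarrow> Gn t z \<le> Gn t y"
    and G3: "\<And>t y. 0 \<le> Gn t y" and G4: "\<And>t y. Gn t y \<le> 1"
    and conv1: "\<And>m j. 0 < j \<Longrightarrow> j < m \<Longrightarrow> (\<lambda>t. Gn t (VaR (real j / real m) F)) \<longlonglongrightarrow> F (VaR (real j / real m) F)"
    and conv2: "\<And>m j. 0 < j \<Longrightarrow> j < m \<Longrightarrow> (\<lambda>t. Gl t (VaR (real j / real m) F)) \<longlonglongrightarrow> Fl (VaR (real j / real m) F)"
  shows "(\<lambda>t. sup_norm (\<lambda>y. Gn t y - F y)) \<longlonglongrightarrow> 0"
proof (rule LIMSEQ_I)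
  fix r :: real assume r: "0 < r"
  define m :: nat where "m = nat \<lceil>2 / r\<rceil> + 2"
  have m2: "2 \<le> m" unfolding m_def by simp
  have mr: "2 / real m < r"
  proof -
    have "2 / r < real m" unfolding m_def by linarith
    then show ?thesis using r m2 by (simp add: field_simps)
  qed
  have m0: "0 < real m" using m2 by simp
  define q where "q j = VaR (real j / real m) F" for j
  have pj: "0 < real j / real m" "real j / real m < 1" if "0 < j" "j < m" for j
    using that m0 by (auto simp: field_simps)
  have Fq: "real j / real m \<le> F (q j)" if "0 < j" "j < m" for j
    unfolding q_def by (rule VaR_at[OF F pj[OF that]])
  have Flq: "Fl (q j) \<le> real j / real m" if "0 < j" "j < m" for j
    unfolding q_def by (rule P2[OF pj[OF that]])
  have ev: "eventually (\<lambda>t. \<forall>j\<in>{0<..<m}. \<bar>Gn t (q j) - F (q j)\<bar> < 1 / real m \<and> \<bar>Gl t (q j) - Fl (q j)\<bar> < 1 / real m) sequentially"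
  proof (rule eventually_ball_finite)
    show "\<forall>j\<in>{0<..<m}. eventually (\<lambda>t. \<bar>Gn t (q j) - F (q j)\<bar> < 1 / real m \<and> \<bar>Gl t (q j) - Fl (q j)\<bar> < 1 / real m) sequentially"
    proof
      fix j assume "j \<in> {0<..<m}"
      then have j: "0 < j" "j < m" by auto
      have a: "eventually (\<lambda>t. dist (Gn t (q j)) (F (q j)) < 1 / real m) sequentially"
        using tendstoD[OF conv1[OF j] , of "1 / real m"] m0 unfolding q_def by simp
      have b: "eventually (\<lambda>t. dist (Gl t (q j)) (Fl (q j)) < 1 / real m) sequentially"
        using tendstoD[OF conv2[OF j] , of "1 / real m"] m0 unfolding q_def by simp
      show "eventually (\<lambda>t. \<bar>Gn t (q j) - F (q j)\<bar> < 1 / real m \<and> \<bar>Gl t (q j) - Fl (q j)\<bar> < 1 / real m) sequentially"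
        using eventually_conj[OF a b] by (simp add: dist_real_def)
    qed
  qed simp
  then obtain T where T: "\<And>t j. T \<le> t \<Longrightarrow> 0 < j \<Longrightarrow> j < m \<Longrightarrow> \<bar>Gn t (q j) - F (q j)\<bar> < 1 / real m \<and> \<bar>Gl t (q j) - Fl (q j)\<bar> < 1 / real m"
  proof -
    from ev obtain N where "\<forall>n\<ge>N. \<forall>j\<in>{0<..<m}. \<bar>Gn n (q j) - F (q j)\<bar> < 1 / real m \<and> \<bar>Gl n (q j) - Fl (q j)\<bar> < 1 / real m"
      by (auto simp: eventually_sequentially)
    then show ?thesis using that[of N] by auto
  qed
  show "\<exists>no. \<forall>t\<ge>no. norm (sup_norm (\<lambda>y. Gn t y - F y) - 0) < r"
  proof (intro exI[of _ T] allI impI)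
    fix t assume tT: "T \<le> t"
    have pw: "\<bar>Gn t y - F y\<bar> \<le> 2 / real m" for y
    proof -
      define A where "A = {j \<in> {0..<m}. j = 0 \<or> q j \<le> y}"
      have Afin: "finite A" unfolding A_def by auto
      have "0 \<in> A" unfolding A_def using m2 by auto
      then have Ane: "A \<noteq> {}" by auto
      define j0 where "j0 = Max A"
      have j0A: "j0 \<in> A" unfolding j0_def using Afin Ane by (rule Max_in)
      have j0max: "j \<in> A \<Longrightarrow> j \<le> j0" for j unfolding j0_def using Afin by (rule Max_ge)
      have j0m: "j0 < m" using j0A unfolding A_def by auto
      have lowF: "real j0 / real m \<le> F y"
      proof (cases "j0 = 0")
        case True then show ?thesis using df_nonneg[OF F] by simp
      next
        case False
        then have "q j0 \<le> y" using j0A unfolding A_def by auto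
        then show ?thesis using Fq[of j0] False j0m df_mono[OF F, of "q j0" y] by simp
      qed
      have lowG: "(real j0 - 1) / real m \<le> Gn t y"
      proof (cases "j0 = 0")
        case True
        have "0 \<le> 1 / real m" using m0 by simp
        moreover have "(real j0 - 1) / real m = - (1 / real m)" using True by simp
        ultimately show ?thesis using G3[of t y] by linarith
      next
        case False
        then have qy: "q j0 \<le> y" using j0A unfolding A_def by auto
        have "(real j0 - 1) / real m = real j0 / real m - 1 / real m" by (simp add: diff_divide_distrib)
        also have "\<dots> \<le> F (q j0) - 1 / real m" using Fq[of j0] False j0m by simp
        also have "\<dots> \<le> Gn t (q j0)" using T[OF tT, of j0] False j0m by (simp add: abs_less_iff)
        also have "\<dots> \<le> Gn t y" by (rule G2[OF qy])
        finally show ?thesis .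
      qed
      have up: "F y \<le> (real j0 + 1) / real m \<and> Gn t y \<le> (real j0 + 2) / real m"
      proof (cases "Suc j0 < m")
        case True
        have "Suc j0 \<notin> A" using j0max[of "Suc j0"] by auto
        then have yq: "y < q (Suc j0)" unfolding A_def using True by auto
        have "F y \<le> Fl (q (Suc j0))" by (rule P1[OF yq])
        also have "\<dots> \<le> (real j0 + 1) / real m" using Flq[of "Suc j0"] True by (simp add: add.commute)
        finally have u1: "F y \<le> (real j0 + 1) / real m" .
        have "Gn t y \<le> Gl t (q (Suc j0))" by (rule G1[OF yq])
        also have "\<dots> \<le> Fl (q (Suc j0)) + 1 / real m" using T[OF tT, of "Suc j0"] True by (simp add: abs_less_iff)
        also have "\<dots> \<le> (real j0 + 1) / real m + 1 / real m" using Flq[of "Suc j0"] True by (simp add: add.commute)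
        also have "\<dots> = (real j0 + 2) / real m" by (simp add: add_divide_distrib[symmetric])
        finally show ?thesis using u1 by simp
      next
        case False
        then have "real j0 + 1 = real m" using j0m by linarith
        then have "(real j0 + 1) / real m = 1" "1 \<le> (real j0 + 2) / real m" using m0 by (auto simp: field_simps)
        then show ?thesis using df_le1[OF F, of y] G4[of t y] by linarith
      qed
      have "Gn t y - F y \<le> 2 / real m"
      proof -
        have "Gn t y - F y \<le> (real j0 + 2) / real m - real j0 / real m" using up lowF by linarith
        also have "\<dots> = 2 / real m" by (simp add: diff_divide_distrib[symmetric])
        finally show ?thesis .
      qed
      moreover have "F y - Gn t y \<le> 2 / real m"
      proof -
        have "F y - Gn t y \<le> (real j0 + 1) / real m - (real j0 - 1) / real m" using up lowG by linarith
        also have "\<dots> = 2 / real m" by (simp add: diff_divide_distrib[symmetric])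
        finally show ?thesis .
      qed
      ultimately show ?thesis by (simp add: abs_le_iff)
    qed
    have bdd: "bdd_above (range (\<lambda>y. \<bar>Gn t y - F y\<bar>))"
    proof (rule bdd_aboveI[of _ 1])
      fix z assume "z \<in> range (\<lambda>y. \<bar>Gn t y - F y\<bar>)"
      then obtain y where "z = \<bar>Gn t y - F y\<bar>" by auto
      then show "z \<le> 1" using G3[of t y] G4[of t y] df_nonneg[OF F, of y] df_le1[OF F, of y] by auto
    qed
    have s1: "sup_norm (\<lambda>y. Gn t y - F y) \<le> 2 / real m"
      unfolding sup_norm_def by (rule cSUP_least) (use pw in auto)
    have s0: "0 \<le> sup_norm (\<lambda>y. Gn t y - F y)"
      unfolding sup_norm_def using cSUP_upper[OF UNIV_I bdd, of 0] by (meson abs_ge_zero order_trans)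
    show "norm (sup_norm (\<lambda>y. Gn t y - F y) - 0) < r" using s1 s0 mr by simp
  qed
qed


lemma (in prob_space) pair_indep:
  assumes ind: "indep_vars (\<lambda>_. borel) X I" and a: "a \<in> I" and b: "b \<in> I" and ab: "a \<noteq> b"
  shows "indep_var borel (X a) borel (X b)"
proof -
  have "indep_var (PiM {a} (\<lambda>_. borel)) (\<lambda>\<omega>. restrict (\<lambda>i. X i \<omega>) {a}) (PiM {b} (\<lambda>_. borel)) (\<lambda>\<omega>. restrict (\<lambda>i. X i \<omega>) {b})"
    by (rule indep_var_restrict[OF ind]) (use a b ab in auto)
  then have "indep_var borel ((\<lambda>f. f a) \<circ> (\<lambda>\<omega>. restrict (\<lambda>i. X i \<omega>) {a})) borel ((\<lambda>f. f b) \<circ> (\<lambda>\<omega>. restrict (\<lambda>i. X i \<omega>) {b}))"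
    by (rule indep_var_compose) (auto intro: measurable_component_singleton)
  moreover have "((\<lambda>f. f a) \<circ> (\<lambda>\<omega>. restrict (\<lambda>i. X i \<omega>) {a})) = X a" by (auto simp: fun_eq_iff)
  moreover have "((\<lambda>f. f b) \<circ> (\<lambda>\<omega>. restrict (\<lambda>i. X i \<omega>) {b})) = X b" by (auto simp: fun_eq_iff)
  ultimately show ?thesis by simp
qed

lemma (in prob_space) slln_apply:
  fixes X :: "nat \<Rightarrow> 'a \<Rightarrow> real" and g :: "real \<Rightarrow> real"
  assumes Xm: "\<And>s. 1 \<le> s \<Longrightarrow> X s \<in> borel_measurable M"
    and ind: "indep_vars (\<lambda>_. borel) X {1..}"
    and idd: "\<And>s. 1 \<le> s \<Longrightarrow> distr M borel (X s) = distr M borel (X 1)"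
    and gm: "g \<in> borel_measurable borel" and gnn: "\<And>y. 0 \<le> g y"
    and gint: "integrable M (\<lambda>\<omega>. g (X 1 \<omega>))"
  shows "AE \<omega> in M. (\<lambda>t. (1 / real t) * (\<Sum>s\<in>{1..t}. g (X s \<omega>))) \<longlonglongrightarrow> expectation (\<lambda>\<omega>. g (X 1 \<omega>))"
proof -
  have Xm'[measurable]: "X (Suc s) \<in> borel_measurable M" for s using Xm[of "Suc s"] by simp
  note gm[measurable]
  interpret S: slln M "\<lambda>s \<omega>. g (X (Suc s) \<omega>)"
  proof (unfold_locales)
    show "(\<lambda>\<omega>. g (X (Suc i) \<omega>)) \<in> borel_measurable M" for i by measurable
    show "0 \<le> g (X (Suc i) x)" for i x by (rule gnn)
    show "indep_var borel (\<lambda>\<omega>. g (X (Suc i) \<omega>)) borel (\<lambda>\<omega>. g (X (Suc j) \<omega>))" if "i \<noteq> j" for i j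
    proof -
      have "indep_var borel (X (Suc i)) borel (X (Suc j))"
        by (rule pair_indep[OF ind]) (use that in auto)
      then have "indep_var borel (g \<circ> X (Suc i)) borel (g \<circ> X (Suc j))"
        by (rule indep_var_compose) auto
      then show ?thesis by (simp add: comp_def)
    qed
    show "distr M borel (\<lambda>\<omega>. g (X (Suc i) \<omega>)) = distr M borel (\<lambda>\<omega>. g (X (Suc 0) \<omega>))" for i
    proof -
      have "distr M borel (\<lambda>\<omega>. g (X (Suc i) \<omega>)) = distr (distr M borel (X (Suc i))) borel g"
        by (subst distr_distr) (auto simp: comp_def)
      also have "\<dots> = distr (distr M borel (X (Suc 0))) borel g" using idd[of "Suc i"] by simp
      also have "\<dots> = distr M borel (\<lambda>\<omega>. g (X (Suc 0) \<omega>))"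
        by (subst distr_distr) (auto simp: comp_def)
      finally show ?thesis .
    qed
    show "integrable M (\<lambda>\<omega>. g (X (Suc 0) \<omega>))" using gint by simp
  qed
  from S.slln_thm show ?thesis
  proof (rule AE_mp, intro AE_I2 impI)
    fix \<omega> assume "(\<lambda>n. (\<Sum>i<n. g (X (Suc i) \<omega>)) / real n) \<longlonglongrightarrow> expectation (\<lambda>\<omega>. g (X (Suc 0) \<omega>))"
    moreover have "(\<Sum>i<n. g (X (Suc i) \<omega>)) / real n = (1 / real n) * (\<Sum>s\<in>{1..n}. g (X s \<omega>))" for n
      by (simp add: sum.atLeast1_atMost_eq)
    ultimately show "(\<lambda>t. (1 / real t) * (\<Sum>s\<in>{1..t}. g (X s \<omega>))) \<longlonglongrightarrow> expectation (\<lambda>\<omega>. g (X 1 \<omega>))"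
      by simp
  qed
qed

definition emp_measure :: "(nat \<Rightarrow> real) \<Rightarrow> nat \<Rightarrow> real measure" where
  "emp_measure x t = distr (measure_pmf (pmf_of_set {1..t})) borel x"

lemma emp_rd: "1 \<le> t \<Longrightarrow> real_distribution (emp_measure x t)"
  unfolding emp_measure_def
  by (intro prob_space.real_distribution_distr measure_pmf.prob_space_axioms) simp

lemma emp_integral:
  assumes t: "1 \<le> t" and f: "f \<in> borel_measurable borel"
  shows "integral\<^sup>L (emp_measure x t) f = (1 / real t) * (\<Sum>s\<in>{1..t}. f (x s))"
proof -
  have "integral\<^sup>L (emp_measure x t) f = integral\<^sup>L (measure_pmf (pmf_of_set {1..t})) (\<lambda>s. f (x s))"
    unfolding emp_measure_def by (rule integral_distr) (auto simp: f)
  also have "\<dots> = (\<Sum>s\<in>{1..t}. f (x s)) / real (card {1..t})"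
    using t by (intro integral_pmf_of_set) auto
  finally show ?thesis by simp
qed

lemma emp_cdf:
  assumes t: "1 \<le> t"
  shows "cdf (emp_measure x t) = empirical_cdf x t"
proof
  fix y
  interpret real_distribution "emp_measure x t" by (rule emp_rd[OF t])
  have "cdf (emp_measure x t) y = integral\<^sup>L (emp_measure x t) (indicator {..y})"
    unfolding cdf_def by simp
  also have "\<dots> = (1 / real t) * (\<Sum>s\<in>{1..t}. indicator {..y} (x s))"
    by (rule emp_integral[OF t]) simp
  also have "\<dots> = empirical_cdf x t y"
    unfolding empirical_cdf_def by (intro arg_cong2[where f="(*)"] refl sum.cong) (auto simp: indicator_def)
  finally show "cdf (emp_measure x t) y = empirical_cdf x t y" .
qed

lemma emp_interval:
  assumes t: "1 \<le> t"
  shows "interval_measure (empirical_cdf x t) = emp_measure x t"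
proof -
  interpret R: real_distribution "emp_measure x t" by (rule emp_rd[OF t])
  have df: "distribution_function (empirical_cdf x t)"
    unfolding distribution_function_def emp_cdf[OF t, symmetric] mono_def
    using R.cdf_nondecreasing R.cdf_is_right_cont R.cdf_lim_at_bot R.cdf_lim_at_top_prob by auto
  show ?thesis
    by (rule cdf_unique[OF df_real_distribution[OF df] emp_rd[OF t]]) (simp add: df_cdf[OF df] emp_cdf[OF t])
qed

lemma emp_LS:
  assumes t: "1 \<le> t"
  shows "LS_neg_int (empirical_cdf x t) = - ((1 / real t) * (\<Sum>s\<in>{1..t}. (if x s \<le> 0 then - x s else 0)))"
proof -
  have "LS_neg_int (empirical_cdf x t) = integral\<^sup>L (emp_measure x t) (\<lambda>y. indicator {..0} y * y)"
    unfolding LS_neg_int_def set_lebesgue_integral_def emp_interval[OF t] by simp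
  also have "\<dots> = (1 / real t) * (\<Sum>s\<in>{1..t}. indicator {..0} (x s) * x s)"
    by (rule emp_integral[OF t]) simp
  also have "\<dots> = - ((1 / real t) * (\<Sum>s\<in>{1..t}. (if x s \<le> 0 then - x s else 0)))"
  proof -
    have "(\<Sum>s\<in>{1..t}. indicator {..0} (x s) * x s) = (\<Sum>s\<in>{1..t}. - (if x s \<le> 0 then - x s else 0))"
      by (intro sum.cong) (auto simp: indicator_def)
    also have "\<dots> = - (\<Sum>s\<in>{1..t}. (if x s \<le> 0 then - x s else 0))" by (rule sum_negf)
    finally show ?thesis by simp
  qed
  finally show ?thesis .
qed


lemma (in prob_space) part2:
  fixes X :: "nat \<Rightarrow> 'a \<Rightarrow> real" and F :: "real \<Rightarrow> real"
  assumes Xm: "\<And>s. 1 \<le> s \<Longrightarrow> X s \<in> borel_measurable M"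
    and ind: "indep_vars (\<lambda>_. borel) X {1..}"
    and cdfX: "\<And>s. 1 \<le> s \<Longrightarrow> cdf (distr M borel (X s)) = F"
    and NIfin: "NI F 0 < \<infinity>"
  shows "AE \<omega> in M. (\<lambda>t. cvar_norm_dist (empirical_cdf (\<lambda>s. X s \<omega>) t) F) \<longlonglongrightarrow> 0"
proof -
  have X1[measurable]: "X 1 \<in> borel_measurable M" using Xm by simp
  have X1'[measurable]: "X (Suc 0) \<in> borel_measurable M" using Xm by simp
  define \<mu> where "\<mu> = distr M borel (X 1)"
  interpret R: real_distribution \<mu> unfolding \<mu>_def by (rule real_distribution_distr[OF X1])
  have cdf\<mu>: "cdf \<mu> = F" unfolding \<mu>_def by (rule cdfX) simp
  have Fdf: "distribution_function F"
    unfolding distribution_function_def cdf\<mu>[symmetric] mono_def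
    using R.cdf_nondecreasing R.cdf_is_right_cont R.cdf_lim_at_bot R.cdf_lim_at_top_prob by auto
  have idd: "distr M borel (X s) = distr M borel (X 1)" if "1 \<le> s" for s
  proof (rule cdf_unique)
    show "real_distribution (distr M borel (X s))" using Xm[OF that] by (intro real_distribution_distr) simp
    show "real_distribution (distr M borel (X 1))" by (rule real_distribution_distr[OF X1])
    show "cdf (distr M borel (X s)) = cdf (distr M borel (X 1))" using cdfX[OF that] cdfX[of 1] by simp
  qed
  have IM: "interval_measure F = \<mu>"
    by (rule cdf_unique[OF df_real_distribution[OF Fdf] R.real_distribution_axioms]) (simp add: df_cdf[OF Fdf] cdf\<mu>)
  define Fl where "Fl y = measure \<mu> {..<y}" for y
  define g0 where "g0 z = (if z \<le> 0 then - z else (0::real))" for z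
  have g0m[measurable]: "g0 \<in> borel_measurable borel" unfolding g0_def by measurable
  have g0nn: "0 \<le> g0 z" for z unfolding g0_def by simp
  have E1: "expectation (\<lambda>\<omega>. indicator {..y} (X 1 \<omega>)) = F y" for y
  proof -
    have "expectation (\<lambda>\<omega>. indicator {..y} (X 1 \<omega>)) = (integral\<^sup>L \<mu> (indicator {..y}) :: real)"
      unfolding \<mu>_def by (rule integral_distr[where g="X 1" and M=M and N=borel and f="indicator {..y} :: real \<Rightarrow> real", symmetric]) auto
    also have "\<dots> = F y" using fun_cong[OF cdf\<mu>, of y] by (simp add: cdf_def)
    finally show ?thesis .
  qed
  have E2: "expectation (\<lambda>\<omega>. indicator {..<y} (X 1 \<omega>)) = Fl y" for y
  proof -
    have "expectation (\<lambda>\<omega>. indicator {..<y} (X 1 \<omega>)) = (integral\<^sup>L \<mu> (indicator {..<y}) :: real)"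
      unfolding \<mu>_def by (rule integral_distr[where g="X 1" and M=M and N=borel and f="indicator {..<y} :: real \<Rightarrow> real", symmetric]) auto
    also have "\<dots> = Fl y" unfolding Fl_def by simp
    finally show ?thesis .
  qed
  have E3: "expectation (\<lambda>\<omega>. g0 (X 1 \<omega>)) = - LS_neg_int F"
  proof -
    have "LS_neg_int F = integral\<^sup>L \<mu> (\<lambda>x. indicator {..0} x * x)"
      unfolding LS_neg_int_def set_lebesgue_integral_def IM by simp
    also have "\<dots> = integral\<^sup>L \<mu> (\<lambda>x. - g0 x)"
      by (intro Bochner_Integration.integral_cong) (auto simp: g0_def indicator_def)
    also have "\<dots> = - integral\<^sup>L \<mu> g0" by simp
    also have "integral\<^sup>L \<mu> g0 = expectation (\<lambda>\<omega>. g0 (X 1 \<omega>))"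
      unfolding \<mu>_def by (rule integral_distr[where g="X 1" and M=M and N=borel and f=g0]) auto
    finally show ?thesis by simp
  qed
  have Int3: "integrable M (\<lambda>\<omega>. g0 (X 1 \<omega>))"
  proof (rule integrableI_nonneg)
    show "AE x in M. 0 \<le> g0 (X 1 x)" by (simp add: g0nn)
    have "(\<integral>\<^sup>+\<omega>. ennreal (g0 (X 1 \<omega>)) \<partial>M) = (\<integral>\<^sup>+z. ennreal (g0 z) \<partial>\<mu>)"
      unfolding \<mu>_def by (rule nn_integral_distr[where T="X 1" and M=M and M'=borel and f="\<lambda>z. ennreal (g0 z)", symmetric]) auto
    also have "\<dots> = (\<integral>\<^sup>+z. ennreal (- z) * indicator {..0} z \<partial>interval_measure F)"
      unfolding IM by (intro nn_integral_cong) (auto simp: g0_def indicator_def)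
    also have "\<dots> = NI F 0" unfolding NI_def by (rule df_tonelli[OF Fdf])
    finally show "(\<integral>\<^sup>+\<omega>. ennreal (g0 (X 1 \<omega>)) \<partial>M) < \<infinity>" using NIfin by simp
  qed simp
  have ind_int: "integrable M (\<lambda>\<omega>. indicator A (X 1 \<omega>) :: real)" if "A \<in> sets borel" for A
    by (rule integrable_const_bound[where B=1]) (use that in auto)
  have AE1: "AE \<omega> in M. (\<lambda>t. (1 / real t) * (\<Sum>s\<in>{1..t}. indicator {..y} (X s \<omega>))) \<longlonglongrightarrow> F y" for y
    using slln_apply[OF Xm ind idd, of "indicator {..y}"] ind_int[of "{..y}"] E1[of y] by simp
  have AE2: "AE \<omega> in M. (\<lambda>t. (1 / real t) * (\<Sum>s\<in>{1..t}. indicator {..<y} (X s \<omega>))) \<longlonglongrightarrow> Fl y" for y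
    using slln_apply[OF Xm ind idd, of "indicator {..<y}"] ind_int[of "{..<y}"] E2[of y] by simp
  have AE3: "AE \<omega> in M. (\<lambda>t. (1 / real t) * (\<Sum>s\<in>{1..t}. g0 (X s \<omega>))) \<longlonglongrightarrow> - LS_neg_int F"
    using slln_apply[OF Xm ind idd g0m g0nn Int3] E3 by simp
  define q where "q mj = VaR (real (snd mj) / real (fst mj)) F" for mj :: "nat \<times> nat"
  have AE12: "AE \<omega> in M. \<forall>mj. (\<lambda>t. (1 / real t) * (\<Sum>s\<in>{1..t}. indicator {..q mj} (X s \<omega>))) \<longlonglongrightarrow> F (q mj)
      \<and> (\<lambda>t. (1 / real t) * (\<Sum>s\<in>{1..t}. indicator {..<q mj} (X s \<omega>))) \<longlonglongrightarrow> Fl (q mj)"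
    unfolding AE_all_countable using AE1 AE2 by (auto intro: AE_conjI)
  have P1: "F z \<le> Fl y" if "z < y" for z y
  proof -
    have "F z = measure \<mu> {..z}" using fun_cong[OF cdf\<mu>, of z] by (simp add: cdf_def)
    also have "\<dots> \<le> measure \<mu> {..<y}" using that by (intro R.finite_measure_mono) auto
    finally show ?thesis unfolding Fl_def .
  qed
  have P2: "Fl (VaR p F) \<le> p" if "0 < p" "p < 1" for p
  proof -
    let ?a = "VaR p F"
    have lim: "(F \<longlongrightarrow> Fl ?a) (at_left ?a)" unfolding Fl_def cdf\<mu>[symmetric] by (rule R.cdf_at_left)
    have "eventually (\<lambda>z. F z \<le> p) (at_left ?a)"
      by (rule eventually_at_leftI[of "?a - 1"]) (use VaR_below[OF Fdf that] in \<open>auto intro: less_imp_le\<close>)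
    then show ?thesis by (rule tendsto_upperbound[OF lim]) simp
  qed
  from AE12 AE3 show ?thesis
  proof (eventually_elim)
    case (elim \<omega>)
    define Gn where "Gn t y = empirical_cdf (\<lambda>s. X s \<omega>) t y" for t y
    define Gl where "Gl t y = (1 / real t) * (\<Sum>s\<in>{1..t}. indicator {..<y} (X s \<omega>))" for t y
    have Gn_alt: "Gn t y = (1 / real t) * (\<Sum>s\<in>{1..t}. indicator {..y} (X s \<omega>))" for t y
      unfolding Gn_def empirical_cdf_def by (intro arg_cong2[where f="(*)"] refl sum.cong) (auto simp: indicator_def)
    have sup: "(\<lambda>t. sup_norm (\<lambda>y. Gn t y - F y)) \<longlonglongrightarrow> 0"
    proof (rule GC_det[OF Fdf P1 P2])
      show "Gn t z \<le> Gl t y" if "z < y" for t z y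
        unfolding Gn_alt Gl_def using that by (intro mult_left_mono sum_mono) (auto simp: indicator_def)
      show "Gn t z \<le> Gn t y" if "z \<le> y" for t z y
        unfolding Gn_alt using that by (intro mult_left_mono sum_mono) (auto simp: indicator_def)
      show "0 \<le> Gn t y" for t y unfolding Gn_alt by (intro mult_nonneg_nonneg sum_nonneg) auto
      show "Gn t y \<le> 1" for t y
      proof -
        have "(\<Sum>s\<in>{1..t}. indicator {..y} (X s \<omega>) :: real) \<le> (\<Sum>s\<in>{1..t}. 1)"
          by (intro sum_mono) (auto simp: indicator_def)
        then have "(\<Sum>s\<in>{1..t}. indicator {..y} (X s \<omega>) :: real) \<le> real t" by simp
        then show ?thesis unfolding Gn_alt
          by (cases "t = 0") (auto simp: divide_le_eq)
      qed
      show "(\<lambda>t. Gn t (VaR (real j / real m) F)) \<longlonglongrightarrow> F (VaR (real j / real m) F)" for m j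
        using elim(1)[rule_format, of "(m, j)"] unfolding Gn_alt q_def by simp
      show "(\<lambda>t. Gl t (VaR (real j / real m) F)) \<longlonglongrightarrow> Fl (VaR (real j / real m) F)" for m j
        using elim(1)[rule_format, of "(m, j)"] unfolding Gl_def q_def by simp
    qed
    have LS: "(\<lambda>t. \<bar>LS_neg_int (empirical_cdf (\<lambda>s. X s \<omega>) t) - LS_neg_int F\<bar>) \<longlonglongrightarrow> 0"
    proof -
      have "(\<lambda>t. \<bar>- ((1 / real t) * (\<Sum>s\<in>{1..t}. g0 (X s \<omega>))) - LS_neg_int F\<bar>) \<longlonglongrightarrow> \<bar>- (- LS_neg_int F) - LS_neg_int F\<bar>"
        by (intro tendsto_intros elim(2))
      then have *: "(\<lambda>t. \<bar>- ((1 / real t) * (\<Sum>s\<in>{1..t}. g0 (X s \<omega>))) - LS_neg_int F\<bar>) \<longlonglongrightarrow> 0" by simp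
      have "eventually (\<lambda>t. \<bar>- ((1 / real t) * (\<Sum>s\<in>{1..t}. g0 (X s \<omega>))) - LS_neg_int F\<bar>
          = \<bar>LS_neg_int (empirical_cdf (\<lambda>s. X s \<omega>) t) - LS_neg_int F\<bar>) sequentially"
      proof (rule eventually_sequentiallyI[of 1])
        fix t :: nat assume "1 \<le> t"
        show "\<bar>- ((1 / real t) * (\<Sum>s\<in>{1..t}. g0 (X s \<omega>))) - LS_neg_int F\<bar>
          = \<bar>LS_neg_int (empirical_cdf (\<lambda>s. X s \<omega>) t) - LS_neg_int F\<bar>"
          unfolding emp_LS[OF \<open>1 \<le> t\<close>] g0_def by simp
      qed
      from Lim_transform_eventually[OF * this] show ?thesis .
    qed
    have "(\<lambda>t. max (sup_norm (\<lambda>y. Gn t y - F y)) \<bar>LS_neg_int (empirical_cdf (\<lambda>s. X s \<omega>) t) - LS_neg_int F\<bar>) \<longlonglongrightarrow> max 0 0"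
      by (intro tendsto_max sup LS)
    then show ?case unfolding cvar_norm_dist_def Gn_def by simp
  qed
qed


lemma cdf_df:
  assumes "real_distribution \<mu>" shows "distribution_function (cdf \<mu>)"
proof -
  interpret R: real_distribution \<mu> by (rule assms)
  show ?thesis unfolding distribution_function_def mono_def
    using R.cdf_nondecreasing R.cdf_is_right_cont R.cdf_lim_at_bot R.cdf_lim_at_top_prob by blast
qed

theorem proposition24:
  fixes M :: "'a measure" and K :: nat and \<alpha> :: real
    and X :: "nat \<Rightarrow> nat \<Rightarrow> 'a \<Rightarrow> real"
    and F :: "nat \<Rightarrow> real \<Rightarrow> real"
  assumes "prob_space M"
    and "K \<ge> 1"
    and rv: "\<And>i s. i \<in> {1..K} \<Longrightarrow> s \<ge> 1 \<Longrightarrow> X i s \<in> borel_measurable M"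
    and indep: "\<And>i. i \<in> {1..K} \<Longrightarrow> prob_space.indep_vars M (\<lambda>_. borel) (X i) {1..}"
    and distr: "\<And>i s. i \<in> {1..K} \<Longrightarrow> s \<ge> 1 \<Longrightarrow> cdf (distr M borel (X i s)) = F i"
    and "0 < \<alpha>" and "\<alpha> < 1"
    and finite_cvar: "\<And>i. i \<in> {1..K} \<Longrightarrow> \<bar>CVaR \<alpha> (F i)\<bar> < \<infinity>"
  shows "(\<forall>G0\<in>mixtures K F. \<forall>\<epsilon>>0. \<exists>\<delta>>0. \<forall>G.
            distribution_function G \<and> LS_neg_finite G \<and> cvar_norm_dist G G0 < \<delta>
              \<longrightarrow> \<bar>CVaR \<alpha> G - CVaR \<alpha> G0\<bar> < ereal \<epsilon>)
       \<and> (\<forall>i\<in>{1..K}. AE \<omega> in M.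
            (\<lambda>t. cvar_norm_dist (empirical_cdf (\<lambda>s. X i s \<omega>) t) (F i)) \<longlonglongrightarrow> 0)"
proof -
  interpret P: prob_space M by (rule assms(1))
  have Fdf: "distribution_function (F i)" if i: "i \<in> {1..K}" for i
  proof -
    have "real_distribution (distr M borel (X i 1))"
      by (rule P.real_distribution_distr) (use rv[OF i, of 1] in simp)
    from cdf_df[OF this] show ?thesis using distr[OF i, of 1] by simp
  qed
  have NIf: "NI (F i) 0 < \<infinity>" if i: "i \<in> {1..K}" for i
    by (rule CVaR_finite_NI[OF Fdf[OF i] \<open>0 < \<alpha>\<close> finite_cvar[OF i]])
  show ?thesis
  proof (intro conjI ballI allI impI)
    fix G0 :: "real \<Rightarrow> real" and \<epsilon> :: real
    assume G0: "G0 \<in> mixtures K F" and e: "0 < \<epsilon>"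
    then obtain p where p: "\<And>i. i \<in> {1..K} \<Longrightarrow> 0 \<le> p i" "(\<Sum>i\<in>{1..K}. p i) = 1"
      and G0eq: "G0 = (\<lambda>x. \<Sum>i\<in>{1..K}. p i * F i x)"
      unfolding mixtures_def by blast
    have dfG0: "distribution_function G0" unfolding G0eq by (rule mixture_df[OF Fdf p])
    have NIG0: "NI G0 0 < \<infinity>" unfolding G0eq by (rule mixture_NI[OF Fdf NIf p(1)])
    show "\<exists>\<delta>>0. \<forall>G. distribution_function G \<and> LS_neg_finite G \<and> cvar_norm_dist G G0 < \<delta>
              \<longrightarrow> \<bar>CVaR \<alpha> G - CVaR \<alpha> G0\<bar> < ereal \<epsilon>"
      by (rule cvar_cont[OF dfG0 NIG0 \<open>0 < \<alpha>\<close> \<open>\<alpha> < 1\<close> e])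
  next
    fix i assume i: "i \<in> {1..K}"
    show "AE \<omega> in M. (\<lambda>t. cvar_norm_dist (empirical_cdf (\<lambda>s. X i s \<omega>) t) (F i)) \<longlonglongrightarrow> 0"
      by (rule P.part2[OF rv[OF i] indep[OF i] distr[OF i] NIf[OF i]])
  qed
qed


end
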